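(* Let $m,n\ge 2$ be integers with $(m,n)\ne(2,2)$, let $K_{m,n}$ be the complete bipartite graph with parts of sizes $m$ and $n$, and let $I_{K_{m,n}}$ be its toric ideal over a field $K$. Then $\mathrm{Split}(I_{K_{m,n}})=\mathrm{Split}_{\mathrm{rad}}(I_{K_{m,n}})=3$.
   Context: $K_{m,n}$ has vertex set $\{x_1,\ldots,x_m\}\cup\{y_1,\ldots,y_n\}$ and edges $b_{ij}=\{x_i,y_j\}$ for all $i,j$. For a graph $G$ with vertices $v_1,\ldots,v_N$ and edges $e_1,\ldots,e_M$, the toric ideal $I_G\subset K[e_1,\ldots,e_M]$ is the kernel of $e_k\mapsto t_it_j$ where $e_k=\{v_i,v_j\}$, i.e. the toric ideal of the configuration $\{{\bf a}_e\}$ with ${\bf a}_e\in\{0,1\}^N$ the indicator vector of the two endpoints of $e$. For a toric ideal $I_A$ (of a configuration $A$ of integer vectors with $\ker_{\mathbb{Z}}(A)\cap\mathbb{N}^M=\{{\bf 0}\}$) in $K[x_1,\ldots,x_M]$: $\mathrm{Split}(I_A)$ is the smallest integer $s$ such that there exist toric ideals $I_{A_1},\ldots,I_{A_s}$ in the same polynomial ring with $I_A=I_{A_1}+\cdots+I_{A_s}$ and $I_{A_i}\ne I_A$ for all $i$; $\mathrm{Split}_{\mathrm{rad}}(I_A)$ is the smallest integer $r$ such that there exist toric ideals $I_{A_1},\ldots,I_{A_r}$ with $I_A=\mathrm{rad}(I_{A_1}+\cdots+I_{A_r})$ and $I_{A_i}\ne I_A$ for all $i$. *)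

theory Defs
  imports Main "HOL-Library.Poly_Mapping"
begin

(* Multivariate polynomials over a field 'k in variables of type 'v:
  monomials are exponent vectors 'v <Rightarrow><^sub>0 nat, polynomials are finitely
  supported maps from monomials to coefficients (ring structure from Poly_Mapping). *)

type_synonym ('v, 'k) mpoly = "('v \<Rightarrow>\<^sub>0 nat) \<Rightarrow>\<^sub>0 'k"

definition PR :: "'v set \<Rightarrow> ('v, 'k::field) mpoly set" where
  "PR V = {p :: ('v, 'k) mpoly. \<forall>mon \<in> Poly_Mapping.keys p. Poly_Mapping.keys mon \<subseteq> V}"

definition monomial_x :: "('v \<Rightarrow>\<^sub>0 nat) \<Rightarrow> ('v, 'k::field) mpoly" where
  "monomial_x u = Poly_Mapping.single u 1"

definition is_ideal_in :: "'v set \<Rightarrow> ('v, 'k::field) mpoly set \<Rightarrow> bool" where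
  "is_ideal_in V I \<longleftrightarrow> I \<subseteq> PR V \<and> 0 \<in> I \<and> (\<forall>a\<in>I. \<forall>b\<in>I. a + b \<in> I)
     \<and> (\<forall>a\<in>I. \<forall>r\<in>PR V. r * a \<in> I)"

(* Ideal of K[x_v : v in V] generated by S (S is assumed to lie in PR V). *)
definition ideal_gen :: "'v set \<Rightarrow> ('v, 'k::field) mpoly set \<Rightarrow> ('v, 'k) mpoly set" where
  "ideal_gen V S = \<Inter>{I. is_ideal_in V I \<and> S \<subseteq> I}"

definition radical_in :: "'v set \<Rightarrow> ('v, 'k::field) mpoly set \<Rightarrow> ('v, 'k) mpoly set" where
  "radical_in V I = {f \<in> PR V. \<exists>k. f ^ k \<in> I}"

(* A configuration: to each variable v a vector A v in Z^d (coordinates indexed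
  by nat, zero from d on), with ker_Z(A) <inter> N^V = {0}. *)
definition toric_config :: "'v set \<Rightarrow> ('v \<Rightarrow> nat \<Rightarrow> int) \<Rightarrow> bool" where
  "toric_config V A \<longleftrightarrow>
     (\<exists>d. \<forall>v\<in>V. \<forall>r\<ge>d. A v r = 0) \<and>
     (\<forall>u :: 'v \<Rightarrow> nat. (\<forall>r. (\<Sum>v\<in>V. int (u v) * A v r) = 0) \<longrightarrow> (\<forall>v\<in>V. u v = 0))"

definition toric_ideal :: "'v set \<Rightarrow> ('v \<Rightarrow> nat \<Rightarrow> int) \<Rightarrow> ('v, 'k::field) mpoly set" where
  "toric_ideal V A = ideal_gen V
     {monomial_x u - monomial_x w | u w. Poly_Mapping.keys u \<subseteq> V \<and> Poly_Mapping.keys w \<subseteq> V \<and>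
        (\<forall>r. (\<Sum>v\<in>V. int (Poly_Mapping.lookup u v) * A v r) = (\<Sum>v\<in>V. int (Poly_Mapping.lookup w v) * A v r))}"

definition splits_into :: "'k::field itself \<Rightarrow> 'v set \<Rightarrow> ('v \<Rightarrow> nat \<Rightarrow> int) \<Rightarrow> nat \<Rightarrow> bool" where
  "splits_into (TYPE('k)) V A s \<longleftrightarrow>
     (\<exists>As :: nat \<Rightarrow> 'v \<Rightarrow> nat \<Rightarrow> int.
        (\<forall>i<s. toric_config V (As i)) \<and>
        (\<forall>i<s. (toric_ideal V (As i) :: ('v,'k) mpoly set) \<noteq> toric_ideal V A) \<and>
        (toric_ideal V A :: ('v,'k) mpoly set) = ideal_gen V (\<Union>i<s. toric_ideal V (As i)))"

definition rad_splits_into :: "'k::field itself \<Rightarrow> 'v set \<Rightarrow> ('v \<Rightarrow> nat \<Rightarrow> int) \<Rightarrow> nat \<Rightarrow> bool" where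
  "rad_splits_into (TYPE('k)) V A r \<longleftrightarrow>
     (\<exists>As :: nat \<Rightarrow> 'v \<Rightarrow> nat \<Rightarrow> int.
        (\<forall>i<r. toric_config V (As i)) \<and>
        (\<forall>i<r. (toric_ideal V (As i) :: ('v,'k) mpoly set) \<noteq> toric_ideal V A) \<and>
        (toric_ideal V A :: ('v,'k) mpoly set)
           = radical_in V (ideal_gen V (\<Union>i<r. toric_ideal V (As i))))"

definition split_number :: "'k::field itself \<Rightarrow> 'v set \<Rightarrow> ('v \<Rightarrow> nat \<Rightarrow> int) \<Rightarrow> nat" where
  "split_number k V A = (LEAST s. splits_into k V A s)"

definition rad_split_number :: "'k::field itself \<Rightarrow> 'v set \<Rightarrow> ('v \<Rightarrow> nat \<Rightarrow> int) \<Rightarrow> nat" where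
  "rad_split_number k V A = (LEAST r. rad_splits_into k V A r)"

(* K_{m,n}: edge b_ij = (i,j), i<m, j<n (0-indexed); vertex x_i is coordinate i,
  vertex y_j is coordinate m+j; a_e is the indicator vector of the endpoints. *)
definition Kmn_edges :: "nat \<Rightarrow> nat \<Rightarrow> (nat \<times> nat) set" where
  "Kmn_edges m n = {0..<m} \<times> {0..<n}"

definition Kmn_config :: "nat \<Rightarrow> nat \<Rightarrow> nat \<times> nat \<Rightarrow> nat \<Rightarrow> int" where
  "Kmn_config m n e r = (if r = fst e \<or> r = m + snd e then 1 else 0)"

end

theory Submission
  imports Defs
begin


abbreviation lk where "lk \<equiv> Poly_Mapping.lookup"
abbreviation ks where "ks \<equiv> Poly_Mapping.keys"
abbreviation sg where "sg \<equiv> Poly_Mapping.single"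

lemma poly_sum_single: "p = (\<Sum>a\<in>ks p. sg a (lk p a))"
proof (rule poly_mapping_eqI)
  fix x
  show "lk p x = lk (\<Sum>a\<in>ks p. sg a (lk p a)) x"
    by (cases "x \<in> ks p") (simp_all add: lookup_sum lookup_single when_def in_keys_iff)
qed

definition T :: "(('v \<Rightarrow>\<^sub>0 nat) \<Rightarrow> 'k) \<Rightarrow> ('v,'k::field) mpoly \<Rightarrow> 'k" where
  "T g p = (\<Sum>mon\<in>ks p. lk p mon * g mon)"

lemma T_superset: "finite S \<Longrightarrow> ks p \<subseteq> S \<Longrightarrow> T g p = (\<Sum>mon\<in>S. lk p mon * g mon)"
  unfolding T_def by (rule sum.mono_neutral_left) (auto simp: in_keys_iff)

lemma T_add: "T g (p + q) = T g p + T g q"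
proof -
  let ?S = "ks p \<union> ks q"
  have "T g (p+q) = (\<Sum>mon\<in>?S. lk (p+q) mon * g mon)"
    by (rule T_superset) (auto dest: set_mp[OF keys_add])
  also have "\<dots> = (\<Sum>mon\<in>?S. lk p mon * g mon) + (\<Sum>mon\<in>?S. lk q mon * g mon)"
    by (simp add: lookup_add distrib_right sum.distrib)
  also have "\<dots> = T g p + T g q"
    using T_superset[of ?S p g] T_superset[of ?S q g] by simp
  finally show ?thesis .
qed

lemma T_zero[simp]: "T g 0 = 0" by (simp add: T_def)

lemma T_single[simp]: "T g (sg x c) = c * g x"
  by (simp add: T_def)

lemma T_sum: "T g (sum f I) = (\<Sum>i\<in>I. T g (f i))"
  by (induction I rule: infinite_finite_induct) (simp_all add: T_add)

lemma T_uminus: "T g (- p) = - T g p"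
  by (simp add: T_def sum_negf)

lemma T_diff: "T g (p - q) = T g p - T g q"
  using T_add[of g p "-q"] by (simp add: T_uminus)

lemma mult_expand:
  "(r::('v,'k::field) mpoly) * a = (\<Sum>x\<in>ks r. \<Sum>y\<in>ks a. sg (x+y) (lk r x * lk a y))"
proof -
  have "r * a = (\<Sum>x\<in>ks r. sg x (lk r x)) * (\<Sum>y\<in>ks a. sg y (lk a y))"
    using poly_sum_single[of r] poly_sum_single[of a] by simp
  also have "\<dots> = (\<Sum>x\<in>ks r. \<Sum>y\<in>ks a. sg (x+y) (lk r x * lk a y))"
    by (simp add: sum_product mult_single)
  finally show ?thesis .
qed

lemma T_mult: "T g ((r::('v,'k::field) mpoly) * a) = (\<Sum>x\<in>ks r. lk r x * T (\<lambda>y. g (x+y)) a)"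
proof -
  have "T g (r * a) = (\<Sum>x\<in>ks r. \<Sum>y\<in>ks a. (lk r x * lk a y) * g (x+y))"
    unfolding mult_expand T_sum T_single ..
  also have "\<dots> = (\<Sum>x\<in>ks r. lk r x * T (\<lambda>y. g (x+y)) a)"
    unfolding T_def by (simp add: sum_distrib_left mult.assoc)
  finally show ?thesis .
qed

definition phi :: "(('v \<Rightarrow>\<^sub>0 nat) \<Rightarrow> ('w \<Rightarrow>\<^sub>0 nat)) \<Rightarrow> ('v,'k::field) mpoly \<Rightarrow> ('w,'k) mpoly" where
  "phi h p = (\<Sum>mon\<in>ks p. sg (h mon) (lk p mon))"

lemma phi_superset: "finite S \<Longrightarrow> ks p \<subseteq> S \<Longrightarrow> phi h p = (\<Sum>mon\<in>S. sg (h mon) (lk p mon))"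
  unfolding phi_def by (rule sum.mono_neutral_left) (auto simp: in_keys_iff)

lemma phi_add: "phi h (p + q) = phi h p + phi h q"
proof -
  let ?S = "ks p \<union> ks q"
  have "phi h (p+q) = (\<Sum>mon\<in>?S. sg (h mon) (lk (p+q) mon))"
    by (rule phi_superset) (auto dest: set_mp[OF keys_add])
  also have "\<dots> = (\<Sum>mon\<in>?S. sg (h mon) (lk p mon)) + (\<Sum>mon\<in>?S. sg (h mon) (lk q mon))"
    by (simp add: lookup_add single_add sum.distrib)
  also have "\<dots> = phi h p + phi h q"
    using phi_superset[of ?S p h] phi_superset[of ?S q h] by simp
  finally show ?thesis .
qed

lemma phi_zero[simp]: "phi h 0 = 0" by (simp add: phi_def)

lemma phi_single[simp]: "phi h (sg x c) = sg (h x) c"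
  by (simp add: phi_def)

lemma phi_sum: "phi h (sum f I) = (\<Sum>i\<in>I. phi h (f i))"
  by (induction I rule: infinite_finite_induct) (simp_all add: phi_add)

lemma phi_mult:
  assumes hadd: "\<And>x y. h (x + y) = h x + h y"
  shows "phi h ((r::('v,'k::field) mpoly) * a) = phi h r * phi h a"
proof -
  have "phi h (r * a) = (\<Sum>x\<in>ks r. \<Sum>y\<in>ks a. sg (h x + h y) (lk r x * lk a y))"
    by (simp add: mult_expand phi_sum hadd)
  also have "\<dots> = phi h r * phi h a"
    by (simp add: phi_def sum_product mult_single)
  finally show ?thesis .
qed

lemma phi_one: assumes "h 0 = 0" shows "phi h 1 = 1"
  using assms phi_single[of h 0 1] by (metis single_one)

lemma phi_power:
  assumes "\<And>x y. h (x + y) = h x + h y" "h 0 = 0"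
  shows "phi h ((r::('v,'k::field) mpoly) ^ k) = phi h r ^ k"
  by (induction k) (simp_all add: phi_one[of h, OF assms(2)] phi_mult[OF assms(1)])

lemma lookup_phi: "lk (phi h p) d = T (\<lambda>mon. if h mon = d then 1 else 0) p"
  by (auto simp: phi_def T_def lookup_sum lookup_single when_def intro!: sum.cong)



definition degB :: "'v set \<Rightarrow> ('v \<Rightarrow> nat \<Rightarrow> int) \<Rightarrow> ('v \<Rightarrow>\<^sub>0 nat) \<Rightarrow> nat \<Rightarrow> int" where
  "degB V B x = (\<lambda>r. \<Sum>v\<in>V. int (lk x v) * B v r)"

definition bins :: "'v set \<Rightarrow> ('v \<Rightarrow> nat \<Rightarrow> int) \<Rightarrow> ('v, 'k::field) mpoly set" where
  "bins V A = {monomial_x u - monomial_x w | u w. Poly_Mapping.keys u \<subseteq> V \<and> Poly_Mapping.keys w \<subseteq> V \<and>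
        (\<forall>r. (\<Sum>v\<in>V. int (Poly_Mapping.lookup u v) * A v r) = (\<Sum>v\<in>V. int (Poly_Mapping.lookup w v) * A v r))}"

lemma toric_bins: "toric_ideal V A = ideal_gen V (bins V A)"
  unfolding toric_ideal_def bins_def ..

lemma degB_add: "degB V B (x + y) r = degB V B x r + degB V B y r"
  by (simp add: degB_def lookup_add distrib_right sum.distrib)

lemma degB_zero[simp]: "degB V B 0 r = 0"
  by (simp add: degB_def)

lemma degB_single: "finite V \<Longrightarrow> v \<in> V \<Longrightarrow> degB V B (sg v 1) r = B v r"
proof -
  assume "finite V" "v \<in> V"
  have "\<And>va. int (lk (sg v 1) va) * B va r = (if v = va then B va r else 0)"
    by (simp add: lookup_single when_def)
  then show ?thesis using \<open>finite V\<close> \<open>v \<in> V\<close> by (simp add: degB_def)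
qed

lemma monomial_x_sg: "monomial_x u = sg u 1" by (simp add: monomial_x_def)

lemma PR_iff: "p \<in> PR V \<longleftrightarrow> (\<forall>mon\<in>ks p. ks mon \<subseteq> V)"
  by (simp add: PR_def)

lemma PR_zero[simp]: "0 \<in> PR V" by (simp add: PR_def)
lemma PR_add: "p \<in> PR V \<Longrightarrow> q \<in> PR V \<Longrightarrow> p + q \<in> PR V"
  unfolding PR_def using keys_add[of p q] by blast
lemma PR_uminus: "p \<in> PR V \<Longrightarrow> - p \<in> PR V"
  unfolding PR_def by simp
lemma PR_diff: "p \<in> PR V \<Longrightarrow> q \<in> PR V \<Longrightarrow> p - q \<in> PR V"
  unfolding PR_def using keys_diff[of p q] by blast
lemma PR_single: "ks x \<subseteq> V \<Longrightarrow> sg x c \<in> PR V"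
  unfolding PR_def by simp
lemma PR_one[simp]: "1 \<in> PR V"
  unfolding PR_def by simp
lemma PR_mult:
  assumes "p \<in> PR V" "q \<in> PR V" shows "p * q \<in> PR V"
  unfolding PR_iff
proof
  fix mon assume "mon \<in> ks (p * q)"
  then obtain a b where ab: "mon = a + b" "a \<in> ks p" "b \<in> ks q" using keys_mult[of p q] by blast
  then have "ks a \<subseteq> V" "ks b \<subseteq> V" using assms by (auto simp: PR_iff)
  then show "ks mon \<subseteq> V" using ab keys_add[of a b] by blast
qed
lemma PR_power: "p \<in> PR V \<Longrightarrow> p ^ k \<in> PR V"
  by (induction k) (simp_all add: PR_mult)

lemma PR_uminus_one: "(-1) \<in> PR V"
  using PR_uminus[OF PR_one] .

subsection \<open>Ideals\<close>

lemma ideal_sub: "is_ideal_in V I \<Longrightarrow> I \<subseteq> PR V" by (simp add: is_ideal_in_def)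
lemma ideal_zero: "is_ideal_in V I \<Longrightarrow> 0 \<in> I" by (simp add: is_ideal_in_def)
lemma ideal_add: "is_ideal_in V I \<Longrightarrow> a \<in> I \<Longrightarrow> b \<in> I \<Longrightarrow> a + b \<in> I" by (simp add: is_ideal_in_def)
lemma ideal_mult: "is_ideal_in V I \<Longrightarrow> a \<in> I \<Longrightarrow> r \<in> PR V \<Longrightarrow> r * a \<in> I" by (simp add: is_ideal_in_def)
lemma ideal_uminus: "is_ideal_in V I \<Longrightarrow> a \<in> I \<Longrightarrow> - a \<in> I"
  by (metis PR_uminus_one ideal_mult mult_minus1)
lemma ideal_diff: "is_ideal_in V I \<Longrightarrow> a \<in> I \<Longrightarrow> b \<in> I \<Longrightarrow> a - b \<in> I"
  by (metis ideal_add ideal_uminus diff_conv_add_uminus)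

lemma PR_ideal: "is_ideal_in V (PR V)"
  unfolding is_ideal_in_def by (simp add: PR_add PR_mult)

lemma ideal_gen_sup: "S \<subseteq> ideal_gen V S"
  unfolding ideal_gen_def by blast

lemma ideal_gen_min: "is_ideal_in V I \<Longrightarrow> S \<subseteq> I \<Longrightarrow> ideal_gen V S \<subseteq> I"
  unfolding ideal_gen_def by blast

lemma is_ideal_inI:
  assumes "I \<subseteq> PR V" "0 \<in> I" "\<And>a b. a \<in> I \<Longrightarrow> b \<in> I \<Longrightarrow> a + b \<in> I"
    "\<And>a r. a \<in> I \<Longrightarrow> r \<in> PR V \<Longrightarrow> r * a \<in> I"
  shows "is_ideal_in V I"
  using assms unfolding is_ideal_in_def by blast

lemma ideal_gen_ideal:
  assumes "S \<subseteq> PR V" shows "is_ideal_in V (ideal_gen V S)"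
proof (rule is_ideal_inI)
  show "ideal_gen V S \<subseteq> PR V" by (rule ideal_gen_min[OF PR_ideal assms])
  show "0 \<in> ideal_gen V S" unfolding ideal_gen_def by (auto simp: is_ideal_in_def)
  show "a + b \<in> ideal_gen V S" if "a \<in> ideal_gen V S" "b \<in> ideal_gen V S" for a b
    using that unfolding ideal_gen_def by (auto simp: is_ideal_in_def)
  show "r * a \<in> ideal_gen V S" if "a \<in> ideal_gen V S" "r \<in> PR V" for a r
    using that unfolding ideal_gen_def by (auto simp: is_ideal_in_def)
qed

lemma bins_PR: "bins V A \<subseteq> PR V"
proof
  fix p assume "p \<in> bins V A"
  then obtain u w where "p = sg u 1 - sg w 1" "ks u \<subseteq> V" "ks w \<subseteq> V"
    unfolding bins_def monomial_x_sg by blast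
  then show "p \<in> PR V" by (simp add: PR_diff PR_single)
qed

lemma toric_ideal_ideal: "is_ideal_in V (toric_ideal V A)"
  unfolding toric_bins by (rule ideal_gen_ideal[OF bins_PR])

lemma toric_PR: "toric_ideal V A \<subseteq> PR V"
  using ideal_sub[OF toric_ideal_ideal] .

lemma bin_in_bins:
  "ks u \<subseteq> V \<Longrightarrow> ks w \<subseteq> V \<Longrightarrow> (\<And>r. degB V A u r = degB V A w r) \<Longrightarrow>
    sg u 1 - sg w 1 \<in> bins V A"
  unfolding bins_def degB_def monomial_x_sg by blast

lemma bin_in_toric:
  "ks u \<subseteq> V \<Longrightarrow> ks w \<subseteq> V \<Longrightarrow> (\<And>r. degB V A u r = degB V A w r) \<Longrightarrow>
    sg u 1 - sg w 1 \<in> toric_ideal V A"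
  using bin_in_bins ideal_gen_sup unfolding toric_bins by blast

subsection \<open>Closed sets\<close>

definition closedC :: "'v set \<Rightarrow> ('v \<Rightarrow> nat \<Rightarrow> int) set \<Rightarrow> ('v \<Rightarrow>\<^sub>0 nat) set \<Rightarrow> bool" where
  "closedC V Bs C \<longleftrightarrow> (\<forall>B\<in>Bs. \<forall>x y. ks x \<subseteq> V \<longrightarrow> ks y \<subseteq> V \<longrightarrow> degB V B x = degB V B y \<longrightarrow> (x \<in> C \<longleftrightarrow> y \<in> C))"

definition ind :: "('v \<Rightarrow>\<^sub>0 nat) set \<Rightarrow> ('v \<Rightarrow>\<^sub>0 nat) \<Rightarrow> 'k::field" where
  "ind C x = (if x \<in> C then 1 else 0)"

definition Hset :: "'v set \<Rightarrow> ('v \<Rightarrow> nat \<Rightarrow> int) set \<Rightarrow> ('v, 'k::field) mpoly set" where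
  "Hset V Bs = {p \<in> PR V. \<forall>C. closedC V Bs C \<longrightarrow> T (ind C) p = 0}"

lemma closedC_shift:
  assumes "closedC V Bs C" "ks x \<subseteq> V"
  shows "closedC V Bs {y. x + y \<in> C}"
  unfolding closedC_def
proof (intro ballI allI impI)
  fix B y z assume B: "B \<in> Bs" and y: "ks y \<subseteq> V" and z: "ks z \<subseteq> V" and d: "degB V B y = degB V B z"
  have "ks (x + y) \<subseteq> V" "ks (x + z) \<subseteq> V" using keys_add[of x y] keys_add[of x z] assms(2) y z by blast+
  moreover have "degB V B (x+y) = degB V B (x+z)"
    using d by (simp add: fun_eq_iff degB_add)
  moreover have "ks (x+y) \<subseteq> V \<longrightarrow> ks (x+z) \<subseteq> V \<longrightarrow> degB V B (x+y) = degB V B (x+z) \<longrightarrow> (x+y \<in> C \<longleftrightarrow> x+z \<in> C)"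
    using assms(1) B unfolding closedC_def by blast
  ultimately show "(y \<in> {y. x + y \<in> C}) = (z \<in> {y. x + y \<in> C})"
    by simp
qed

lemma Hset_ideal: "is_ideal_in V (Hset V Bs :: ('v,'k::field) mpoly set)"
  unfolding is_ideal_in_def
proof (intro conjI ballI)
  show "Hset V Bs \<subseteq> PR V" by (auto simp: Hset_def)
  show "0 \<in> (Hset V Bs :: ('v,'k) mpoly set)" by (simp add: Hset_def)
  show "a + b \<in> Hset V Bs" if "a \<in> Hset V Bs" "b \<in> Hset V Bs" for a b :: "('v,'k) mpoly"
    using that by (simp add: Hset_def PR_add T_add)
  show "r * a \<in> Hset V Bs" if a: "a \<in> Hset V Bs" and r: "r \<in> PR V" for a r :: "('v,'k) mpoly"
  proof -
    have "T (ind C) (r * a) = 0" if C: "closedC V Bs C" for C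
    proof -
      have "T (\<lambda>y. ind C (x + y)) a = 0" if x: "x \<in> ks r" for x
      proof -
        have "ks x \<subseteq> V" using r x by (auto simp: PR_def)
        then have "closedC V Bs {y. x + y \<in> C}" using closedC_shift C by blast
        moreover have "(\<lambda>y. ind C (x + y)) = (ind {y. x + y \<in> C} :: _ \<Rightarrow> 'k)"
          by (simp add: ind_def fun_eq_iff)
        ultimately show ?thesis using a unfolding Hset_def by auto
      qed
      then show ?thesis by (simp add: T_mult)
    qed
    then show ?thesis using a r by (simp add: Hset_def PR_mult)
  qed
qed

lemma toric_sub_Hset:
  assumes "B \<in> Bs"
  shows "toric_ideal V B \<subseteq> (Hset V Bs :: ('v,'k::field) mpoly set)"
  unfolding toric_bins
proof (rule ideal_gen_min[OF Hset_ideal], rule subsetI)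
  fix p :: "('v,'k) mpoly" assume "p \<in> bins V B"
  then obtain u w where p: "p = sg u 1 - sg w 1" and u: "ks u \<subseteq> V" and w: "ks w \<subseteq> V"
    and d0: "\<forall>r. (\<Sum>v\<in>V. int (lk u v) * B v r) = (\<Sum>v\<in>V. int (lk w v) * B v r)"
    unfolding bins_def monomial_x_sg by blast
  have d: "degB V B u = degB V B w" using d0 by (simp add: degB_def fun_eq_iff)
  have "T (ind C) p = 0" if "closedC V Bs C" for C
  proof -
    have "u \<in> C \<longleftrightarrow> w \<in> C" using that assms u w d unfolding closedC_def by blast
    then show ?thesis by (simp add: p T_diff ind_def)
  qed
  moreover have "p \<in> PR V" using p u w by (simp add: PR_diff PR_single)
  ultimately show "p \<in> Hset V Bs" by (simp add: Hset_def)
qed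

lemma gen_sub_Hset:
  "ideal_gen V (\<Union>i<s. toric_ideal V (Bs i)) \<subseteq> (Hset V (Bs ` {..<s}) :: ('v,'k::field) mpoly set)"
  by (rule ideal_gen_min[OF Hset_ideal]) (use toric_sub_Hset in blast)

lemma toric_bin_deg:
  assumes "sg u 1 - sg w 1 \<in> (toric_ideal V B :: ('v,'k::field) mpoly set)"
    and "ks u \<subseteq> V" "ks w \<subseteq> V"
  shows "degB V B u = degB V B w"
proof (rule ccontr)
  assume ne: "degB V B u \<noteq> degB V B w"
  let ?C = "{x. degB V B x = degB V B u}"
  have cl: "closedC V {B} ?C" unfolding closedC_def by simp
  have "sg u 1 - sg w 1 \<in> (Hset V {B} :: ('v,'k) mpoly set)"
    using toric_sub_Hset[of B "{B}" V] assms(1) by blast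
  then have "T (ind ?C) (sg u 1 - sg w 1 :: ('v,'k) mpoly) = 0"
    using cl by (simp add: Hset_def)
  then show False using ne by (simp add: T_diff ind_def)
qed



lemma phi_uminus: "phi h (- p) = - phi h p"
  using phi_add[of h p "-p"] by (metis neg_eq_iff_add_eq_0 phi_zero right_minus)

lemma phi_diff: "phi h (p - q) = phi h p - phi h q"
  using phi_add[of h p "-q"] by (simp add: phi_uminus)

lemma fiber_zero_in_toric:
  assumes hh: "\<And>u w. ks u \<subseteq> V \<Longrightarrow> ks w \<subseteq> V \<Longrightarrow> h u = h w \<Longrightarrow> degB V A u = degB V A w"
  shows "f \<in> PR V \<Longrightarrow> (\<forall>d. T (\<lambda>mon. if h mon = d then 1 else 0) f = 0) \<Longrightarrow>
     (f :: ('v,'k::field) mpoly) \<in> toric_ideal V A"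
proof (induction "card (ks f)" arbitrary: f rule: less_induct)
  case less
  note I = toric_ideal_ideal[of V A]
  show ?case
  proof (cases "ks f = {}")
    case True
    then have "f = 0" by simp
    then show ?thesis using ideal_zero[OF I] by simp
  next
    case False
    then obtain u where u: "u \<in> ks f" by blast
    define c where "c = lk f u"
    have c0: "c \<noteq> 0" using u by (simp add: c_def in_keys_iff)
    have "\<exists>w\<in>ks f. w \<noteq> u \<and> h w = h u"
    proof (rule ccontr)
      assume "\<not> ?thesis"
      then have "\<And>mon. mon \<in> ks f \<Longrightarrow> lk f mon * (if h mon = h u then 1 else 0) = (if mon = u then c else 0)"
        by (auto simp: c_def)
      then have "T (\<lambda>mon. if h mon = h u then 1 else 0) f = (\<Sum>mon\<in>ks f. if mon = u then c else 0)"
        unfolding T_def by (rule sum.cong[OF refl])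
      also have "\<dots> = c" using u by simp
      finally show False using less.prems(2) c0 by simp
    qed
    then obtain w where w: "w \<in> ks f" "w \<noteq> u" "h w = h u" by blast
    have uV: "ks u \<subseteq> V" and wV: "ks w \<subseteq> V" using less.prems(1) u w(1) by (auto simp: PR_iff)
    define f' where "f' = f - sg u c + sg w c"
    have lk': "lk f' x = lk f x - (if x = u then c else 0) + (if x = w then c else 0)" for x
      by (simp add: f'_def lookup_add lookup_minus lookup_single when_def)
    have sub: "ks f' \<subseteq> ks f - {u}"
    proof
      fix x assume x: "x \<in> ks f'"
      show "x \<in> ks f - {u}"
      proof (cases "x = u")
        case True
        then have "lk f' x = 0" using w(2) by (simp add: lk' c_def)
        then show ?thesis using x by (simp add: in_keys_iff)
      next
        case False
        show ?thesis
        proof (cases "x = w")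
          case True then show ?thesis using w False by simp
        next
          case False2: False
          then have "lk f' x = lk f x" using False by (simp add: lk')
          then show ?thesis using x False by (simp add: in_keys_iff)
        qed
      qed
    qed
    have card: "card (ks f') < card (ks f)"
      by (rule le_less_trans[OF card_mono[OF _ sub] card_Diff1_less[OF _ u]]) simp_all
    have PR': "f' \<in> PR V" unfolding f'_def
      by (intro PR_add PR_diff less.prems(1) PR_single uV wV)
    have T': "\<forall>d. T (\<lambda>mon. if h mon = d then 1 else 0) f' = 0"
      using less.prems(2) w(3) by (simp add: f'_def T_add T_diff)
    have f'I: "f' \<in> toric_ideal V A" using less.hyps[OF card PR' T'] .
    have dd: "degB V A u = degB V A w" using hh[OF uV wV] w(3) by metis
    have bin: "sg u 1 - sg w 1 \<in> toric_ideal V A"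
      using bin_in_toric[OF uV wV, of A] dd by simp
    have "sg 0 c * (sg u 1 - sg w 1) \<in> toric_ideal V A"
      by (rule ideal_mult[OF I bin PR_single]) simp
    then have "f' + sg 0 c * (sg u 1 - sg w 1) \<in> toric_ideal V A"
      by (rule ideal_add[OF I f'I])
    moreover have "f' + sg 0 c * (sg u 1 - sg w 1) = f"
      by (simp add: f'_def right_diff_distrib mult_single)
    ultimately show ?thesis by simp
  qed
qed

lemma toric_radical:
  fixes h :: "('v \<Rightarrow>\<^sub>0 nat) \<Rightarrow> (nat \<Rightarrow>\<^sub>0 nat)"
  assumes hadd: "\<And>x y. h (x + y) = h x + h y" and h0: "h 0 = 0"
    and hh: "\<And>u w. ks u \<subseteq> V \<Longrightarrow> ks w \<subseteq> V \<Longrightarrow> h u = h w \<longleftrightarrow> degB V A u = degB V A w"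
    and f: "f \<in> PR V" and fk: "f ^ k \<in> (toric_ideal V A :: ('v,'k::field) mpoly set)"
  shows "f \<in> toric_ideal V A"
proof -
  let ?K = "{p :: ('v,'k) mpoly. p \<in> PR V \<and> phi h p = (0 :: (nat,'k) mpoly)}"
  have Kid: "is_ideal_in V ?K"
    by (rule is_ideal_inI) (auto simp: PR_add PR_mult phi_add phi_mult[OF hadd])
  have "bins V A \<subseteq> ?K"
  proof
    fix p :: "('v,'k) mpoly" assume "p \<in> bins V A"
    then obtain u w where p: "p = sg u 1 - sg w 1" and u: "ks u \<subseteq> V" and w: "ks w \<subseteq> V"
      and d0: "\<forall>r. (\<Sum>v\<in>V. int (lk u v) * A v r) = (\<Sum>v\<in>V. int (lk w v) * A v r)"
      unfolding bins_def monomial_x_sg by blast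
    have "degB V A u = degB V A w" using d0 by (simp add: degB_def fun_eq_iff)
    then have "h u = h w" using hh[OF u w] by simp
    then show "p \<in> ?K" using p u w by (simp add: phi_diff PR_diff PR_single)
  qed
  then have "toric_ideal V A \<subseteq> ?K" unfolding toric_bins by (rule ideal_gen_min[OF Kid])
  then have "phi h (f ^ k) = (0 :: (nat,'k) mpoly)" using fk by blast
  then have "phi h f ^ k = (0 :: (nat,'k) mpoly)" by (simp add: phi_power[OF hadd h0])
  then have "phi h f = (0 :: (nat,'k) mpoly)" by simp
  then have "\<forall>d. T (\<lambda>mon. if h mon = d then 1 else 0) f = (0::'k)"
    by (metis lookup_phi lookup_zero)
  then show ?thesis
    using fiber_zero_in_toric[of V h A f] hh f by blast
qed



definition rowd :: "nat \<Rightarrow> ((nat\<times>nat) \<Rightarrow>\<^sub>0 nat) \<Rightarrow> nat \<Rightarrow> nat" where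
  "rowd n x i = (\<Sum>j<n. lk x (i,j))"
definition cold :: "nat \<Rightarrow> ((nat\<times>nat) \<Rightarrow>\<^sub>0 nat) \<Rightarrow> nat \<Rightarrow> nat" where
  "cold m x j = (\<Sum>i<m. lk x (i,j))"

lemma rowd_add: "rowd n (x + y) i = rowd n x i + rowd n y i"
  by (simp add: rowd_def lookup_add sum.distrib)
lemma cold_add: "cold m (x + y) j = cold m x j + cold m y j"
  by (simp add: cold_def lookup_add sum.distrib)

lemma Kmn_V: "Kmn_edges m n = {..<m} \<times> {..<n}"
  by (auto simp: Kmn_edges_def)

lemma finite_V[simp]: "finite (Kmn_edges m n)"
  by (simp add: Kmn_V)

lemma degK_row:
  assumes "r < m"
  shows "degB (Kmn_edges m n) (Kmn_config m n) x r = int (rowd n x r)"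
proof -
  have "degB (Kmn_edges m n) (Kmn_config m n) x r
      = (\<Sum>a<m. \<Sum>b<n. int (lk x (a,b)) * (if r = a \<or> r = m + b then 1 else 0))"
    unfolding degB_def Kmn_V Kmn_config_def by (simp add: sum.cartesian_product split_def)
  also have "\<dots> = (\<Sum>a<m. if a = r then (\<Sum>b<n. int (lk x (a,b))) else 0)"
    using assms by (intro sum.cong refl) auto
  also have "\<dots> = int (rowd n x r)" using assms by (simp add: rowd_def)
  finally show ?thesis .
qed

lemma degK_col:
  assumes "j < n"
  shows "degB (Kmn_edges m n) (Kmn_config m n) x (m + j) = int (cold m x j)"
proof -
  have "degB (Kmn_edges m n) (Kmn_config m n) x (m + j)
      = (\<Sum>a<m. \<Sum>b<n. int (lk x (a,b)) * (if m + j = a \<or> m + j = m + b then 1 else 0))"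
    unfolding degB_def Kmn_V Kmn_config_def by (auto simp: sum.cartesian_product split_def intro!: sum.cong)
  also have "\<dots> = (\<Sum>b<n. \<Sum>a<m. int (lk x (a,b)) * (if m + j = a \<or> m + j = m + b then 1 else 0))"
    by (rule sum.swap)
  also have "\<dots> = (\<Sum>b<n. if b = j then (\<Sum>a<m. int (lk x (a,b))) else 0)"
    by (intro sum.cong refl) auto
  also have "\<dots> = int (cold m x j)" using assms by (simp add: cold_def)
  finally show ?thesis .
qed

lemma degK_out:
  assumes "r \<ge> m + n"
  shows "degB (Kmn_edges m n) (Kmn_config m n) x r = 0"
  unfolding degB_def Kmn_V Kmn_config_def using assms by (intro sum.neutral) auto

lemma degK_eq_iff:
  "degB (Kmn_edges m n) (Kmn_config m n) x = degB (Kmn_edges m n) (Kmn_config m n) y \<longleftrightarrow>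
    (\<forall>i<m. rowd n x i = rowd n y i) \<and> (\<forall>j<n. cold m x j = cold m y j)"
proof
  assume d: "degB (Kmn_edges m n) (Kmn_config m n) x = degB (Kmn_edges m n) (Kmn_config m n) y"
  show "(\<forall>i<m. rowd n x i = rowd n y i) \<and> (\<forall>j<n. cold m x j = cold m y j)"
    using d degK_row[of _ m n] degK_col[of _ n m] by (metis of_nat_eq_iff)
next
  assume h: "(\<forall>i<m. rowd n x i = rowd n y i) \<and> (\<forall>j<n. cold m x j = cold m y j)"
  show "degB (Kmn_edges m n) (Kmn_config m n) x = degB (Kmn_edges m n) (Kmn_config m n) y"
  proof
    fix r
    consider "r < m" | "m \<le> r" "r < m + n" | "r \<ge> m + n" by linarith
    then show "degB (Kmn_edges m n) (Kmn_config m n) x r = degB (Kmn_edges m n) (Kmn_config m n) y r"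
    proof cases
      case 1 then show ?thesis using h by (simp add: degK_row)
    next
      case 2
      then obtain j where j: "r = m + j" "j < n" by (metis add_less_cancel_left le_Suc_ex)
      then show ?thesis using h by (simp add: degK_col)
    next
      case 3 then show ?thesis by (simp add: degK_out)
    qed
  qed
qed

definition hK :: "nat \<Rightarrow> nat \<Rightarrow> ((nat\<times>nat) \<Rightarrow>\<^sub>0 nat) \<Rightarrow> (nat \<Rightarrow>\<^sub>0 nat)" where
  "hK m n x = (\<Sum>i<m. sg i (rowd n x i)) + (\<Sum>j<n. sg (m + j) (cold m x j))"

lemma hK_add: "hK m n (x + y) = hK m n x + hK m n y"
  by (simp add: hK_def rowd_add cold_add single_add sum.distrib algebra_simps)

lemma hK_zero: "hK m n 0 = 0"
  by (simp add: hK_def rowd_def cold_def)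

lemma lookup_hK:
  "lk (hK m n x) r = (if r < m then rowd n x r else if r < m + n then cold m x (r - m) else 0)"
proof -
  have a: "lk (\<Sum>i<m. sg i (rowd n x i)) r = (if r < m then rowd n x r else 0)"
    by (simp add: lookup_sum lookup_single when_def)
  have b: "lk (\<Sum>j<n. sg (m + j) (cold m x j)) r = (if m \<le> r \<and> r < m + n then cold m x (r - m) else 0)"
  proof (cases "m \<le> r \<and> r < m + n")
    case True
    then obtain j where j: "r = m + j" "j < n" by (metis add_less_cancel_left le_Suc_ex)
    have "lk (\<Sum>j<n. sg (m + j) (cold m x j)) r = (\<Sum>j'<n. if j' = j then cold m x j' else 0)"
      unfolding lookup_sum lookup_single when_def j by (intro sum.cong refl) auto
    then show ?thesis using True j by simp
  next
    case False
    then show ?thesis by (auto simp: lookup_sum lookup_single when_def intro!: sum.neutral)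
  qed
  show ?thesis by (simp add: hK_def lookup_add a b)
qed

lemma hK_eq_iff:
  "hK m n x = hK m n y \<longleftrightarrow>
    degB (Kmn_edges m n) (Kmn_config m n) x = degB (Kmn_edges m n) (Kmn_config m n) y"
proof -
  have "hK m n x = hK m n y \<longleftrightarrow> (\<forall>r. lk (hK m n x) r = lk (hK m n y) r)"
    by (simp add: poly_mapping_eq_iff fun_eq_iff)
  also have "\<dots> \<longleftrightarrow> (\<forall>i<m. rowd n x i = rowd n y i) \<and> (\<forall>j<n. cold m x j = cold m y j)"
  proof
    assume h: "\<forall>r. lk (hK m n x) r = lk (hK m n y) r"
    show "(\<forall>i<m. rowd n x i = rowd n y i) \<and> (\<forall>j<n. cold m x j = cold m y j)"
    proof (intro conjI allI impI)
      fix i assume "i < m" then show "rowd n x i = rowd n y i" using h[rule_format, of i] by (simp add: lookup_hK)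
    next
      fix j assume "j < n" then show "cold m x j = cold m y j" using h[rule_format, of "m+j"] by (simp add: lookup_hK)
    qed
  next
    assume h: "(\<forall>i<m. rowd n x i = rowd n y i) \<and> (\<forall>j<n. cold m x j = cold m y j)"
    show "\<forall>r. lk (hK m n x) r = lk (hK m n y) r"
      using h by (auto simp: lookup_hK)
  qed
  also have "\<dots> \<longleftrightarrow> degB (Kmn_edges m n) (Kmn_config m n) x = degB (Kmn_edges m n) (Kmn_config m n) y"
    by (rule degK_eq_iff[symmetric])
  finally show ?thesis .
qed

lemma Kmn_radical:
  assumes "f \<in> PR (Kmn_edges m n)"
    and "f ^ k \<in> (toric_ideal (Kmn_edges m n) (Kmn_config m n) :: ((nat\<times>nat),'k::field) mpoly set)"
  shows "f \<in> toric_ideal (Kmn_edges m n) (Kmn_config m n)"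
  by (rule toric_radical[of "hK m n", OF hK_add hK_zero hK_eq_iff assms])



abbreviation ev :: "nat \<times> nat \<Rightarrow> ((nat\<times>nat) \<Rightarrow>\<^sub>0 nat)" where "ev v \<equiv> sg v 1"

definition quad :: "nat \<Rightarrow> nat \<Rightarrow> nat \<Rightarrow> nat \<Rightarrow> ((nat\<times>nat), 'k::field) mpoly" where
  "quad a b c d = sg (ev (a,c) + ev (b,d)) 1 - sg (ev (a,d) + ev (b,c)) 1"

definition EQ :: "nat \<Rightarrow> nat \<Rightarrow> ((nat\<times>nat) \<Rightarrow>\<^sub>0 nat) \<Rightarrow> ((nat\<times>nat) \<Rightarrow>\<^sub>0 nat) \<Rightarrow> bool" where
  "EQ m n x y \<longleftrightarrow> (\<forall>i<m. rowd n x i = rowd n y i) \<and> (\<forall>j<n. cold m x j = cold m y j)"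

definition tdeg :: "nat \<Rightarrow> nat \<Rightarrow> ((nat\<times>nat) \<Rightarrow>\<^sub>0 nat) \<Rightarrow> nat" where
  "tdeg m n x = (\<Sum>v\<in>Kmn_edges m n. lk x v)"

lemma tdeg_add: "tdeg m n (x + y) = tdeg m n x + tdeg m n y"
  by (simp add: tdeg_def lookup_add sum.distrib)

lemma tdeg_ev: "v \<in> Kmn_edges m n \<Longrightarrow> tdeg m n (ev v) = 1"
  by (simp add: tdeg_def lookup_single when_def)

lemma rowd_ev: "rowd n (sg (a,b) k) r = (if r = a \<and> b < n then k else 0)"
  by (auto simp: rowd_def lookup_single when_def)

lemma cold_ev: "cold m (sg (a,b) k) r = (if r = b \<and> a < m then k else 0)"
  by (auto simp: cold_def lookup_single when_def)

lemma split_mon: "lk x v \<ge> 1 \<Longrightarrow> x = ev v + (x - ev v)"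
  by (rule poly_mapping_eqI) (auto simp: lookup_add lookup_minus lookup_single when_def)

lemma ks_minus_sub: "ks (x - ev v) \<subseteq> ks x"
  by (auto simp: in_keys_iff lookup_minus)

lemma ks_ev_V: "v \<in> V \<Longrightarrow> ks (ev v) \<subseteq> V" by simp

lemma EQ_add_cancel: "EQ m n (z + x) (z + y) \<Longrightarrow> EQ m n x y"
  by (simp add: EQ_def rowd_add cold_add)

lemma rowd_ge: "j < n \<Longrightarrow> lk x (i,j) \<le> rowd n x i"
  unfolding rowd_def by (rule member_le_sum) auto
lemma cold_ge: "i < m \<Longrightarrow> lk x (i,j) \<le> cold m x j"
  unfolding cold_def by (rule member_le_sum) auto

lemma zero_if_rowd:
  assumes "ks x \<subseteq> Kmn_edges m n" "\<forall>i<m. rowd n x i = 0"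
  shows "x = 0"
proof (rule ccontr)
  assume "x \<noteq> 0"
  then obtain v where v: "v \<in> ks x" by (metis all_not_in_conv keys_eq_empty)
  obtain i j where ij: "v = (i,j)" by fastforce
  have "i < m" "j < n" using v ij assms(1) by (auto simp: Kmn_edges_def)
  then have "lk x (i,j) \<le> 0" using rowd_ge[of j n x i] assms(2) by simp
  then show False using v ij by (simp add: in_keys_iff)
qed

lemma sum_pos_ex: "(1::nat) \<le> (\<Sum>j<n. f j) \<Longrightarrow> \<exists>j<n. 1 \<le> f j"
proof (rule ccontr)
  assume a: "1 \<le> (\<Sum>j<n. f j)" "\<not> (\<exists>j<n. 1 \<le> f j)"
  then have "\<forall>j\<in>{..<n}. f j = 0" by auto
  then have "(\<Sum>j<n. f j) = 0" by simp
  then show False using a by simp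
qed

lemma quad_gen:
  fixes J :: "((nat\<times>nat), 'k::field) mpoly set"
  assumes J: "is_ideal_in (Kmn_edges m n) J"
    and Q: "\<And>a b c d. a < m \<Longrightarrow> b < m \<Longrightarrow> c < n \<Longrightarrow> d < n \<Longrightarrow> quad a b c d \<in> J"
  shows "toric_ideal (Kmn_edges m n) (Kmn_config m n) \<subseteq> J"
proof -
  let ?V = "Kmn_edges m n"
  have main: "\<And>u w. tdeg m n u = N \<Longrightarrow> ks u \<subseteq> ?V \<Longrightarrow> ks w \<subseteq> ?V \<Longrightarrow> EQ m n u w \<Longrightarrow>
     (sg u 1 - sg w 1 :: ((nat\<times>nat), 'k) mpoly) \<in> J" for N
  proof (induction N rule: less_induct)
    case (less N u w)
    have shared: "(sg u 1 - sg w' 1 :: ((nat\<times>nat), 'k) mpoly) \<in> J"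
      if w': "ks w' \<subseteq> ?V" "EQ m n u w'" and v: "v \<in> ?V" "lk u v \<ge> 1" "lk w' v \<ge> 1" for w' v
    proof -
      define u' where "u' = u - ev v"
      define w'' where "w'' = w' - ev v"
      have u: "u = ev v + u'" using split_mon[OF v(2)] by (simp add: u'_def)
      have w: "w' = ev v + w''" using split_mon[OF v(3)] by (simp add: w''_def)
      have "EQ m n u' w''" using EQ_add_cancel w'(2) u w by metis
      moreover have "tdeg m n u' < N" using less.prems(1) u tdeg_add[of m n "ev v" u'] tdeg_ev[OF v(1)] by simp
      moreover have "ks u' \<subseteq> ?V" "ks w'' \<subseteq> ?V"
        using ks_minus_sub less.prems(2) w'(1) unfolding u'_def w''_def by blast+
      ultimately have "(sg u' 1 - sg w'' 1 :: ((nat\<times>nat), 'k) mpoly) \<in> J"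
        using less.IH by blast
      then have "sg (ev v) 1 * (sg u' 1 - sg w'' 1 :: ((nat\<times>nat), 'k) mpoly) \<in> J"
        by (rule ideal_mult[OF J]) (rule PR_single, use v in simp)
      then show ?thesis using u w by (simp add: right_diff_distrib mult_single)
    qed
    show ?case
    proof (cases "\<exists>v\<in>?V. lk u v \<ge> 1 \<and> lk w v \<ge> 1")
      case True
      then show ?thesis using shared less.prems by blast
    next
      case False
      note disj = False
      show ?thesis
      proof (cases "u = 0")
        case True
        then have "\<forall>i<m. rowd n w i = 0" using less.prems(4) by (simp add: EQ_def rowd_def)
        then have "w = 0" using zero_if_rowd less.prems(3) by blast
        then show ?thesis using True ideal_zero[OF J] by simp
      next
        case False
        then obtain v where v: "v \<in> ks u" by (metis all_not_in_conv keys_eq_empty)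
        obtain i j where ij: "v = (i,j)" by fastforce
        have i: "i < m" and j: "j < n" using v ij less.prems(2) by (auto simp: Kmn_edges_def)
        have uij: "lk u (i,j) \<ge> 1" using v ij by (simp add: in_keys_iff)
        have ijV: "(i,j) \<in> ?V" using i j by (simp add: Kmn_edges_def)
        then have "\<not> lk w (i,j) \<ge> 1" using disj uij by blast
        then have wij: "lk w (i,j) = 0" by simp
        have "rowd n w i \<ge> 1" using rowd_ge[OF j, of u i] uij less.prems(4) i by (simp add: EQ_def)
        then obtain j' where j': "j' < n" "lk w (i,j') \<ge> 1"
          unfolding rowd_def using sum_pos_ex by blast
        have "cold m w j \<ge> 1" using cold_ge[OF i, of u j] uij less.prems(4) j by (simp add: EQ_def)
        then obtain i' where i': "i' < m" "lk w (i',j) \<ge> 1"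
          unfolding cold_def using sum_pos_ex[of "\<lambda>i. lk w (i,j)" m] by blast
        have jj: "j' \<noteq> j" using j' wij by auto
        have ii: "i' \<noteq> i" using i' wij by auto
        define w1 where "w1 = w - ev (i,j')"
        define w2 where "w2 = w1 - ev (i',j)"
        have w1: "w = ev (i,j') + w1" using split_mon[OF j'(2)] by (simp add: w1_def)
        have "lk w1 (i',j) \<ge> 1" using i'(2) ii by (simp add: w1_def lookup_minus lookup_single when_def)
        then have w2: "w1 = ev (i',j) + w2" using split_mon by (simp add: w2_def)
        have ww: "w = ev (i,j') + ev (i',j) + w2" using w1 w2 by (simp add: add.assoc)
        define c where "c = ev (i,j) + ev (i',j') + w2"
        have w2V: "ks w2 \<subseteq> ?V" using ks_minus_sub less.prems(3) unfolding w2_def w1_def by blast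
        have cV: "ks c \<subseteq> ?V" unfolding c_def using w2V i j i' j'
          by (auto simp: Kmn_edges_def dest!: set_mp[OF keys_add])
        have EQcw: "EQ m n c w" unfolding EQ_def c_def ww
          using i j i' j' by (simp add: rowd_add cold_add rowd_ev cold_ev)
        have EQuc: "EQ m n u c" using EQcw less.prems(4) by (simp add: EQ_def)
        have "lk c (i,j) \<ge> 1" by (simp add: c_def lookup_add)
        then have uc: "(sg u 1 - sg c 1 :: ((nat\<times>nat), 'k) mpoly) \<in> J"
          using shared[OF cV EQuc _ uij] i j by (simp add: Kmn_edges_def)
        have "sg w2 1 * quad i i' j j' \<in> J"
          by (rule ideal_mult[OF J Q[OF i i'(1) j j'(1)] PR_single[OF w2V]])
        moreover have "sg w2 1 * (quad i i' j j' :: ((nat\<times>nat), 'k) mpoly) = sg c 1 - sg w 1"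
          by (simp add: quad_def c_def ww right_diff_distrib mult_single add_ac)
        ultimately have cw: "(sg c 1 - sg w 1 :: ((nat\<times>nat), 'k) mpoly) \<in> J" by simp
        have "(sg u 1 - sg c 1) + (sg c 1 - sg w 1 :: ((nat\<times>nat), 'k) mpoly) \<in> J"
          by (rule ideal_add[OF J uc cw])
        then show ?thesis by simp
      qed
    qed
  qed
  show ?thesis unfolding toric_bins
  proof (rule ideal_gen_min[OF J], rule subsetI)
    fix p :: "((nat\<times>nat), 'k) mpoly" assume "p \<in> bins ?V (Kmn_config m n)"
    then obtain u w where p: "p = sg u 1 - sg w 1" and u: "ks u \<subseteq> ?V" and w: "ks w \<subseteq> ?V"
      and d0: "\<forall>r. (\<Sum>v\<in>?V. int (lk u v) * Kmn_config m n v r) = (\<Sum>v\<in>?V. int (lk w v) * Kmn_config m n v r)"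
      unfolding bins_def monomial_x_sg by blast
    have "degB ?V (Kmn_config m n) u = degB ?V (Kmn_config m n) w" using d0 by (simp add: degB_def fun_eq_iff)
    then have "EQ m n u w" by (simp add: degK_eq_iff EQ_def)
    then show "p \<in> J" using main[OF refl u w] p by simp
  qed
qed



lemma degB_sg: "finite V \<Longrightarrow> v \<in> V \<Longrightarrow> degB V B (sg v p) r = int p * B v r"
proof -
  assume "finite V" "v \<in> V"
  have "\<And>va. int (lk (sg v p) va) * B va r = (if v = va then int p * B v r else 0)"
    by (simp add: lookup_single when_def)
  then show ?thesis using \<open>finite V\<close> \<open>v \<in> V\<close> by (simp add: degB_def)
qed

lemma inV: "(a,c) \<in> Kmn_edges m n \<longleftrightarrow> a < m \<and> c < n"
  by (simp add: Kmn_edges_def)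

definition Zq :: "((nat\<times>nat) \<Rightarrow> nat \<Rightarrow> int) \<Rightarrow> nat \<Rightarrow> nat \<Rightarrow> nat \<Rightarrow> nat \<Rightarrow> bool" where
  "Zq B a b c d \<longleftrightarrow> (\<forall>r. B (a,c) r + B (b,d) r = B (a,d) r + B (b,c) r)"

lemma quad_PR: "a < m \<Longrightarrow> b < m \<Longrightarrow> c < n \<Longrightarrow> d < n \<Longrightarrow> quad a b c d \<in> PR (Kmn_edges m n)"
  unfolding quad_def
  by (intro PR_diff PR_single) (auto simp: inV dest!: set_mp[OF keys_add])

lemma degB_two:
  "x \<in> Kmn_edges m n \<Longrightarrow> y \<in> Kmn_edges m n \<Longrightarrow> degB (Kmn_edges m n) B (ev x + ev y) r = B x r + B y r"
  by (simp add: degB_add degB_sg)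

lemma quad_in_toric_iff:
  assumes "a < m" "b < m" "c < n" "d < n"
  shows "quad a b c d \<in> (toric_ideal (Kmn_edges m n) B :: ((nat\<times>nat),'k::field) mpoly set) \<longleftrightarrow> Zq B a b c d"
proof
  let ?V = "Kmn_edges m n"
  have k1: "ks (ev (a,c) + ev (b,d)) \<subseteq> ?V" "ks (ev (a,d) + ev (b,c)) \<subseteq> ?V"
    using assms by (auto simp: inV dest!: set_mp[OF keys_add])
  {
    assume "quad a b c d \<in> (toric_ideal ?V B :: ((nat\<times>nat),'k::field) mpoly set)"
    then have "degB ?V B (ev (a,c) + ev (b,d)) = degB ?V B (ev (a,d) + ev (b,c))"
      using toric_bin_deg[OF _ k1] unfolding quad_def by blast
    moreover have "(a,c) \<in> ?V" "(b,d) \<in> ?V" "(a,d) \<in> ?V" "(b,c) \<in> ?V" using assms by (simp_all add: inV)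
    ultimately show "Zq B a b c d" unfolding Zq_def by (metis degB_two)
  }
  {
    assume "Zq B a b c d"
    then have "\<And>r. degB ?V B (ev (a,c) + ev (b,d)) r = degB ?V B (ev (a,d) + ev (b,c)) r"
      using assms degB_two[of "(a,c)" m n "(b,d)" B] degB_two[of "(a,d)" m n "(b,c)" B]
      by (simp add: Zq_def inV)
    then show "quad a b c d \<in> (toric_ideal ?V B :: ((nat\<times>nat),'k::field) mpoly set)"
      unfolding quad_def by (rule bin_in_toric[OF k1])
  }
qed

lemma Zq_Kmn: "a < m \<Longrightarrow> b < m \<Longrightarrow> c < n \<Longrightarrow> d < n \<Longrightarrow> Zq (Kmn_config m n) a b c d"
  by (auto simp: Zq_def Kmn_config_def)

definition Al :: "nat \<Rightarrow> nat \<Rightarrow> nat\<times>nat \<Rightarrow> (nat\<times>nat \<Rightarrow> nat \<Rightarrow> int)" where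
  "Al m n E v r = Kmn_config m n v r + (if v = E \<and> r = m + n then 1 else 0)"

lemma degB_Al:
  assumes "E \<in> Kmn_edges m n"
  shows "degB (Kmn_edges m n) (Al m n E) x r
     = degB (Kmn_edges m n) (Kmn_config m n) x r + (if r = m + n then int (lk x E) else 0)"
proof -
  have "degB (Kmn_edges m n) (Al m n E) x r
     = degB (Kmn_edges m n) (Kmn_config m n) x r
       + (\<Sum>v\<in>Kmn_edges m n. if v = E then (if r = m + n then int (lk x E) else 0) else 0)"
  proof -
    have "\<And>v. int (lk x v) * Al m n E v r = int (lk x v) * Kmn_config m n v r
       + (if v = E then (if r = m + n then int (lk x E) else 0) else 0)"
      by (auto simp: Al_def algebra_simps)
    then show ?thesis unfolding degB_def by (simp add: sum.distrib)
  qed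
  also have "\<dots> = degB (Kmn_edges m n) (Kmn_config m n) x r + (if r = m + n then int (lk x E) else 0)"
    using assms by simp
  finally show ?thesis .
qed

lemma Al_config:
  assumes "E \<in> Kmn_edges m n"
  shows "toric_config (Kmn_edges m n) (Al m n E)"
  unfolding toric_config_def
proof (intro conjI allI impI ballI)
  show "\<exists>d. \<forall>v\<in>Kmn_edges m n. \<forall>r\<ge>d. Al m n E v r = 0"
  proof (intro exI ballI allI impI)
    fix v r assume v: "v \<in> Kmn_edges m n" and r: "m + n + 1 \<le> r"
    obtain i j where ij: "v = (i,j)" by fastforce
    have "i < m" "j < n" using v ij by (simp_all add: inV)
    then show "Al m n E v r = 0" using r ij by (simp add: Al_def Kmn_config_def)
  qed
next
  fix u :: "nat\<times>nat \<Rightarrow> nat" and v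
  assume h: "\<forall>r. (\<Sum>v\<in>Kmn_edges m n. int (u v) * Al m n E v r) = 0" and v: "v \<in> Kmn_edges m n"
  have nn: "\<And>w r. 0 \<le> Al m n E w r" by (simp add: Al_def Kmn_config_def)
  have "int (u v) * Al m n E v (fst v) \<le> (\<Sum>w\<in>Kmn_edges m n. int (u w) * Al m n E w (fst v))"
    by (rule member_le_sum[OF v]) (simp_all add: nn)
  also have "\<dots> = 0" using h by blast
  finally have 1: "int (u v) * Al m n E v (fst v) \<le> 0" .
  have "Al m n E v (fst v) \<ge> 1" by (simp add: Al_def Kmn_config_def)
  then have "int (u v) * 1 \<le> int (u v) * Al m n E v (fst v)"
    by (intro mult_left_mono) simp_all
  then have "int (u v) \<le> 0" using 1 by simp
  then show "u v = 0" by simp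
qed

lemma J_sub_IA:
  assumes E: "E \<in> Kmn_edges m n"
  shows "(toric_ideal (Kmn_edges m n) (Al m n E) :: ((nat\<times>nat),'k::field) mpoly set)
     \<subseteq> toric_ideal (Kmn_edges m n) (Kmn_config m n)"
  unfolding toric_bins[of _ "Al m n E"]
proof (rule ideal_gen_min[OF toric_ideal_ideal], rule subsetI)
  let ?V = "Kmn_edges m n"
  fix p :: "((nat\<times>nat),'k) mpoly" assume "p \<in> bins ?V (Al m n E)"
  then obtain u w where p: "p = sg u 1 - sg w 1" and u: "ks u \<subseteq> ?V" and w: "ks w \<subseteq> ?V"
    and d0: "\<forall>r. (\<Sum>v\<in>?V. int (lk u v) * Al m n E v r) = (\<Sum>v\<in>?V. int (lk w v) * Al m n E v r)"
    unfolding bins_def monomial_x_sg by blast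
  have "degB ?V (Kmn_config m n) u r = degB ?V (Kmn_config m n) w r" for r
  proof (cases "r = m + n")
    case True then show ?thesis by (simp add: degK_out)
  next
    case False
    then show ?thesis using d0[rule_format, of r] degB_Al[OF E, of u r] degB_Al[OF E, of w r]
      by (simp add: degB_def)
  qed
  then show "p \<in> toric_ideal ?V (Kmn_config m n)" using p bin_in_toric[OF u w] by blast
qed

lemma quad_in_J:
  assumes E: "E \<in> Kmn_edges m n" and abcd: "a < m" "b < m" "c < n" "d < n"
    and nE: "E \<noteq> (a,c)" "E \<noteq> (b,d)" "E \<noteq> (a,d)" "E \<noteq> (b,c)"
  shows "quad a b c d \<in> (toric_ideal (Kmn_edges m n) (Al m n E) :: ((nat\<times>nat),'k::field) mpoly set)"
  unfolding quad_in_toric_iff[OF abcd] Zq_def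
proof
  fix r
  have K: "Kmn_config m n (a,c) r + Kmn_config m n (b,d) r = Kmn_config m n (a,d) r + Kmn_config m n (b,c) r"
    using Zq_Kmn[OF abcd] unfolding Zq_def by blast
  have n': "((a,c) = E) = False" "((b,d) = E) = False" "((a,d) = E) = False" "((b,c) = E) = False"
    using nE by auto
  show "Al m n E (a,c) r + Al m n E (b,d) r = Al m n E (a,d) r + Al m n E (b,c) r"
    unfolding Al_def n' using K by simp
qed

lemma quad_notin_J:
  assumes abcd: "a < m" "b < m" "c < n" "d < n" and ne: "a \<noteq> b" "c \<noteq> d"
  shows "quad a b c d \<notin> (toric_ideal (Kmn_edges m n) (Al m n (a,c)) :: ((nat\<times>nat),'k::field) mpoly set)"
  unfolding quad_in_toric_iff[OF abcd] Zq_def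
proof
  let ?B = "Al m n (a,c)"
  assume "\<forall>r. ?B (a,c) r + ?B (b,d) r = ?B (a,d) r + ?B (b,c) r"
  then have "?B (a,c) (m+n) + ?B (b,d) (m+n) = ?B (a,d) (m+n) + ?B (b,c) (m+n)" by (rule spec)
  moreover have "?B (a,c) (m+n) = 1" using abcd by (simp add: Al_def Kmn_config_def)
  moreover have "?B (b,d) (m+n) = 0" using abcd ne by (simp add: Al_def Kmn_config_def)
  moreover have "?B (a,d) (m+n) = 0" using abcd ne by (simp add: Al_def Kmn_config_def)
  moreover have "?B (b,c) (m+n) = 0" using abcd ne by (simp add: Al_def Kmn_config_def)
  ultimately show False by simp
qed



lemma two_rel:
  assumes cov: "\<forall>x\<in>S. \<forall>y\<in>S. R0 x y \<or> R1 x y"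
    and s0: "\<And>x y. R0 x y \<Longrightarrow> R0 y x" and t0: "\<And>x y z. R0 x y \<Longrightarrow> R0 y z \<Longrightarrow> R0 x z"
    and s1: "\<And>x y. R1 x y \<Longrightarrow> R1 y x" and t1: "\<And>x y z. R1 x y \<Longrightarrow> R1 y z \<Longrightarrow> R1 x z"
  shows "(\<forall>x\<in>S. \<forall>y\<in>S. R0 x y) \<or> (\<forall>x\<in>S. \<forall>y\<in>S. R1 x y)"
proof (rule disjCI)
  assume "\<not> (\<forall>x\<in>S. \<forall>y\<in>S. R1 x y)"
  then obtain c d where cd: "c \<in> S" "d \<in> S" "\<not> R1 c d" by blast
  have r0: "R0 c d" using cov cd by blast
  have xc: "R0 x c" if x: "x \<in> S" for x
  proof (cases "R0 x c")
    case True then show ?thesis .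
  next
    case False
    have "R0 x d"
    proof (rule ccontr)
      assume "\<not> R0 x d"
      then have "R1 x d" using cov x cd(2) by blast
      moreover have "R1 x c" using False cov x cd(1) by blast
      ultimately have "R1 c d" using s1 t1 by metis
      then show False using cd(3) by simp
    qed
    then show ?thesis using t0[OF _ s0[OF r0]] by simp
  qed
  show "\<forall>x\<in>S. \<forall>y\<in>S. R0 x y"
  proof (intro ballI)
    fix x y assume "x \<in> S" "y \<in> S"
    then show "R0 x y" using t0[OF xc s0[OF xc]] by simp
  qed
qed

lemma Zq_sym_col: "Zq B a b c d \<Longrightarrow> Zq B a b d c"
  unfolding Zq_def by (metis add.commute)
lemma Zq_trans_col: "Zq B a b c d \<Longrightarrow> Zq B a b d e \<Longrightarrow> Zq B a b c e"
  unfolding Zq_def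
proof (intro allI)
  fix r
  assume h1: "\<forall>r. B (a, c) r + B (b, d) r = B (a, d) r + B (b, c) r"
    and h2: "\<forall>r. B (a, d) r + B (b, e) r = B (a, e) r + B (b, d) r"
  show "B (a, c) r + B (b, e) r = B (a, e) r + B (b, c) r"
    using spec[OF h1, of r] spec[OF h2, of r] by linarith
qed
lemma Zq_sym_row: "Zq B a b c d \<Longrightarrow> Zq B b a c d"
  unfolding Zq_def by (metis add.commute)
lemma Zq_trans_row: "Zq B a b c d \<Longrightarrow> Zq B b e c d \<Longrightarrow> Zq B a e c d"
  unfolding Zq_def
proof (intro allI)
  fix r
  assume h1: "\<forall>r. B (a, c) r + B (b, d) r = B (a, d) r + B (b, c) r"
    and h2: "\<forall>r. B (b, c) r + B (e, d) r = B (b, d) r + B (e, c) r"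
  show "B (a, c) r + B (e, d) r = B (a, d) r + B (e, c) r"
    using spec[OF h1, of r] spec[OF h2, of r] by linarith
qed
lemma Zq_degen: "Zq B a a c d" "Zq B a b c c"
  unfolding Zq_def by (simp_all add: add.commute)

lemma level:
  assumes cov: "\<forall>a<m. \<forall>b<m. \<forall>c<n. \<forall>d<n. Zq B0 a b c d \<or> Zq B1 a b c d"
  shows "(\<forall>a<m. \<forall>b<m. \<forall>c<n. \<forall>d<n. Zq B0 a b c d) \<or> (\<forall>a<m. \<forall>b<m. \<forall>c<n. \<forall>d<n. Zq B1 a b c d)"
proof -
  have step1: "(\<forall>c\<in>{..<n}. \<forall>d\<in>{..<n}. Zq B0 a b c d) \<or> (\<forall>c\<in>{..<n}. \<forall>d\<in>{..<n}. Zq B1 a b c d)"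
    if ab: "a < m" "b < m" for a b
  proof (rule two_rel[of "{..<n}" "Zq B0 a b" "Zq B1 a b"])
    show "\<forall>x\<in>{..<n}. \<forall>y\<in>{..<n}. Zq B0 a b x y \<or> Zq B1 a b x y" using cov ab by simp
  next
    show "Zq B0 a b y x" if "Zq B0 a b x y" for x y using that by (rule Zq_sym_col)
  next
    show "Zq B0 a b x z" if "Zq B0 a b x y" "Zq B0 a b y z" for x y z using that by (rule Zq_trans_col)
  next
    show "Zq B1 a b y x" if "Zq B1 a b x y" for x y using that by (rule Zq_sym_col)
  next
    show "Zq B1 a b x z" if "Zq B1 a b x y" "Zq B1 a b y z" for x y z using that by (rule Zq_trans_col)
  qed
  let ?R0 = "\<lambda>a b. \<forall>c\<in>{..<n}. \<forall>d\<in>{..<n}. Zq B0 a b c d"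
  let ?R1 = "\<lambda>a b. \<forall>c\<in>{..<n}. \<forall>d\<in>{..<n}. Zq B1 a b c d"
  have sym: "\<forall>c\<in>{..<n}. \<forall>d\<in>{..<n}. Zq B a' b' c d"
    if "\<forall>c\<in>{..<n}. \<forall>d\<in>{..<n}. Zq B b' a' c d" for B a' b'
    using that Zq_sym_row by blast
  have trans: "\<forall>c\<in>{..<n}. \<forall>d\<in>{..<n}. Zq B a' e' c d"
    if "\<forall>c\<in>{..<n}. \<forall>d\<in>{..<n}. Zq B a' b' c d" "\<forall>c\<in>{..<n}. \<forall>d\<in>{..<n}. Zq B b' e' c d" for B a' b' e'
  proof (intro ballI)
    fix c d assume "c \<in> {..<n}" "d \<in> {..<n}"
    then show "Zq B a' e' c d" using that Zq_trans_row[of B a' b' c d e'] by blast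
  qed
  have "(\<forall>a\<in>{..<m}. \<forall>b\<in>{..<m}. ?R0 a b) \<or> (\<forall>a\<in>{..<m}. \<forall>b\<in>{..<m}. ?R1 a b)"
  proof (rule two_rel[of "{..<m}" ?R0 ?R1])
    show "\<forall>x\<in>{..<m}. \<forall>y\<in>{..<m}. ?R0 x y \<or> ?R1 x y" using step1 by simp
  next
    show "?R0 y x" if "?R0 x y" for x y using sym that by blast
  next
    show "?R0 x z" if "?R0 x y" "?R0 y z" for x y z using trans[OF that] .
  next
    show "?R1 y x" if "?R1 x y" for x y using sym that by blast
  next
    show "?R1 x z" if "?R1 x y" "?R1 y z" for x y z using trans[OF that] .
  qed
  then show ?thesis unfolding Ball_def lessThan_iff by blast
qed

definition Wm :: "nat \<Rightarrow> nat \<Rightarrow> nat \<Rightarrow> nat \<Rightarrow> nat \<Rightarrow> ((nat\<times>nat) \<Rightarrow>\<^sub>0 nat)" where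
  "Wm a b c d k = sg (a,d) k + sg (b,c) k"

lemma T_ind_single: "T (ind {x}) p = lk p x"
  unfolding T_def ind_def
  by (cases "x \<in> ks p") (simp_all add: in_keys_iff if_distrib sum.delta cong: if_cong)

lemma quad_pow:
  assumes ne: "a \<noteq> b" "c \<noteq> d"
  shows "\<exists>g. (quad a b c d :: ((nat\<times>nat),'k::field) mpoly) ^ k = sg (Wm a b c d k) ((-1)^k) + g
          \<and> (\<forall>x\<in>ks g. lk x (a,c) \<ge> 1)"
proof (induction k)
  case 0
  have "Wm a b c d 0 = 0" by (simp add: Wm_def)
  then show ?case by (intro exI[of _ 0]) simp
next
  case (Suc k)
  then obtain g where g: "(quad a b c d :: ((nat\<times>nat),'k) mpoly) ^ k = sg (Wm a b c d k) ((-1)^k) + g"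
    and gk: "\<forall>x\<in>ks g. lk x (a,c) \<ge> 1" by blast
  let ?U = "ev (a,c) + ev (b,d)"
  let ?e = "(-1::'k)^k"
  have q: "quad a b c d = sg ?U 1 - sg (Wm a b c d 1) 1"
    by (simp add: quad_def Wm_def)
  have sS: "sg x (Suc k) = sg x 1 + sg x k" for x :: "nat\<times>nat"
    by (metis plus_1_eq_Suc single_add)
  have W: "Wm a b c d 1 + Wm a b c d k = Wm a b c d (Suc k)"
    by (simp only: Wm_def sS add_ac)
  have W': "Wm a b c d (Suc 0) + Wm a b c d k = Wm a b c d (Suc k)"
    using W by simp
  define g' where "g' = sg (?U + Wm a b c d k) ?e + (quad a b c d :: ((nat\<times>nat),'k) mpoly) * g"
  have "(quad a b c d :: ((nat\<times>nat),'k) mpoly) ^ Suc k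
      = quad a b c d * (sg (Wm a b c d k) ?e + g)" using g by simp
  also have "\<dots> = sg (?U + Wm a b c d k) ?e - sg (Wm a b c d 1 + Wm a b c d k) ?e + quad a b c d * g"
  proof -
    have "quad a b c d * sg (Wm a b c d k) ?e = sg (?U + Wm a b c d k) ?e - sg (Wm a b c d 1 + Wm a b c d k) ?e"
      unfolding q left_diff_distrib mult_single by simp
    then show ?thesis by (simp only: distrib_left)
  qed
  also have "\<dots> = sg (Wm a b c d (Suc k)) ((-1)^Suc k) + g'"
    by (simp add: W W' g'_def single_uminus[symmetric])
  finally have eq: "(quad a b c d :: ((nat\<times>nat),'k) mpoly) ^ Suc k = sg (Wm a b c d (Suc k)) ((-1)^Suc k) + g'" .
  have "\<forall>x\<in>ks g'. lk x (a,c) \<ge> 1"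
  proof
    fix x assume "x \<in> ks g'"
    then have "x \<in> ks (sg (?U + Wm a b c d k) ?e) \<or> x \<in> ks ((quad a b c d :: ((nat\<times>nat),'k) mpoly) * g)"
      unfolding g'_def using keys_add[of "sg (?U + Wm a b c d k) ?e" "(quad a b c d :: ((nat\<times>nat),'k) mpoly) * g"] by blast
    then show "lk x (a,c) \<ge> 1"
    proof
      assume "x \<in> ks (sg (?U + Wm a b c d k) ?e)"
      then have "x = ?U + Wm a b c d k" by (simp split: if_splits)
      then show ?thesis by (simp add: lookup_add)
    next
      assume "x \<in> ks ((quad a b c d :: ((nat\<times>nat),'k) mpoly) * g)"
      then have "x \<in> {p1 + p2 | p1 p2. p1 \<in> ks (quad a b c d :: ((nat\<times>nat),'k) mpoly) \<and> p2 \<in> ks g}"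
        using keys_mult[of "quad a b c d :: ((nat\<times>nat),'k) mpoly" g] by blast
      then obtain x1 x2 where x12: "x = x1 + x2" "x2 \<in> ks g" by blast
      then have "lk x2 (a,c) \<ge> 1" using gk by blast
      then show ?thesis using x12(1) by (simp add: lookup_add)
    qed
  qed
  then show ?case using eq by blast
qed

lemma quad_pow_lookup:
  assumes ne: "a \<noteq> b" "c \<noteq> d"
  shows "lk ((quad a b c d :: ((nat\<times>nat),'k::field) mpoly) ^ k) (Wm a b c d k) = (-1)^k"
proof -
  obtain g where g: "(quad a b c d :: ((nat\<times>nat),'k) mpoly) ^ k = sg (Wm a b c d k) ((-1)^k) + g"
    and gk: "\<forall>x\<in>ks g. lk x (a,c) \<ge> 1" using quad_pow[OF ne] by blast
  have "lk (Wm a b c d k) (a,c) = 0" using ne by (simp add: Wm_def lookup_add lookup_single)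
  then have "Wm a b c d k \<notin> ks g" using gk by force
  then have "lk g (Wm a b c d k) = 0" by (simp add: in_keys_iff)
  then show ?thesis by (simp add: g lookup_add)
qed



lemma fiber_rep:
  assumes abcd: "a < m" "b < m" "c < n" "d < n" and ne: "a \<noteq> b" "c \<noteq> d"
    and y: "ks y \<subseteq> Kmn_edges m n" and eq: "EQ m n y (Wm a b c d k)"
  shows "lk y (a,c) \<le> k \<and> y = sg (a,c) (lk y (a,c)) + sg (b,d) (lk y (a,c))
            + sg (a,d) (k - lk y (a,c)) + sg (b,c) (k - lk y (a,c))"
proof -
  have rowW: "rowd n (Wm a b c d k) i = (if i = a then k else 0) + (if i = b then k else 0)" for i
    using abcd by (auto simp: Wm_def rowd_add rowd_ev)
  have colW: "cold m (Wm a b c d k) j = (if j = d then k else 0) + (if j = c then k else 0)" for j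
    using abcd by (auto simp: Wm_def cold_add cold_ev)
  have supp: "(i = a \<or> i = b) \<and> (j = c \<or> j = d)" if nz: "lk y (i,j) \<noteq> 0" for i j
  proof -
    have "(i,j) \<in> Kmn_edges m n" using y nz by (auto simp: in_keys_iff)
    then have ij: "i < m" "j < n" by (auto simp: inV)
    have "rowd n y i > 0" using rowd_ge[OF ij(2), of y i] nz by simp
    then have "rowd n (Wm a b c d k) i > 0" using eq ij by (simp add: EQ_def)
    then have 1: "i = a \<or> i = b" using rowW[of i] by (auto split: if_splits)
    have "cold m y j > 0" using cold_ge[OF ij(1), of y j] nz by simp
    then have "cold m (Wm a b c d k) j > 0" using eq ij by (simp add: EQ_def)
    then have 2: "j = c \<or> j = d" using colW[of j] by (auto split: if_splits)
    show ?thesis using 1 2 by blast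
  qed
  define yac where "yac = lk y (a,c)"
  define yad where "yad = lk y (a,d)"
  define ybc where "ybc = lk y (b,c)"
  define ybd where "ybd = lk y (b,d)"
  have yrep: "y = sg (a,c) yac + sg (a,d) yad + sg (b,c) ybc + sg (b,d) ybd"
  proof (rule poly_mapping_eqI)
    fix v :: "nat \<times> nat"
    obtain i j where v: "v = (i,j)" by fastforce
    show "lk y v = lk (sg (a,c) yac + sg (a,d) yad + sg (b,c) ybc + sg (b,d) ybd) v"
    proof (cases "lk y (i,j) = 0")
      case True
      then show ?thesis using ne unfolding v yac_def yad_def ybc_def ybd_def
        by (auto simp: lookup_add lookup_single when_def)
    next
      case False
      then have "(i = a \<or> i = b) \<and> (j = c \<or> j = d)" using supp by blast
      then show ?thesis using ne unfolding v yac_def yad_def ybc_def ybd_def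
        by (auto simp: lookup_add lookup_single when_def)
    qed
  qed
  have ra: "yac + yad = k"
  proof -
    have "rowd n y a = yac + yad" using abcd ne by (subst yrep) (simp add: rowd_add rowd_ev)
    moreover have "rowd n y a = k" using eq abcd ne rowW[of a] by (simp add: EQ_def)
    ultimately show ?thesis by simp
  qed
  have rb: "ybc + ybd = k"
  proof -
    have "rowd n y b = ybc + ybd" using abcd ne by (subst yrep) (simp add: rowd_add rowd_ev)
    moreover have "rowd n y b = k" using eq abcd ne rowW[of b] by (simp add: EQ_def)
    ultimately show ?thesis by simp
  qed
  have cc: "yac + ybc = k"
  proof -
    have "cold m y c = yac + ybc" using abcd ne by (subst yrep) (simp add: cold_add cold_ev)
    moreover have "cold m y c = k" using eq abcd ne colW[of c] by (simp add: EQ_def)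
    ultimately show ?thesis by simp
  qed
  have "yad = k - yac" "ybc = k - yac" "ybd = yac" "yac \<le> k" using ra rb cc by linarith+
  then show ?thesis using yrep unfolding yac_def[symmetric] by (simp add: add_ac)
qed

lemma ks_Wm: "a < m \<Longrightarrow> b < m \<Longrightarrow> c < n \<Longrightarrow> d < n \<Longrightarrow> ks (Wm a b c d k) \<subseteq> Kmn_edges m n"
  unfolding Wm_def by (auto simp: inV split: if_splits dest!: set_mp[OF keys_add])

lemma closed_W:
  fixes Bs :: "nat \<Rightarrow> (nat\<times>nat) \<Rightarrow> nat \<Rightarrow> int"
  assumes abcd: "a < m" "b < m" "c < n" "d < n" and ne: "a \<noteq> b" "c \<noteq> d"
    and nZ: "\<forall>i<s. \<not> Zq (Bs i) a b c d"
    and sub: "\<forall>i<s. (toric_ideal (Kmn_edges m n) (Bs i) :: ((nat\<times>nat),'k::field) mpoly set)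
                  \<subseteq> toric_ideal (Kmn_edges m n) (Kmn_config m n)"
  shows "closedC (Kmn_edges m n) (Bs ` {..<s}) {Wm a b c d k}"
proof -
  let ?V = "Kmn_edges m n"
  let ?W = "Wm a b c d k"
  have WV: "ks ?W \<subseteq> ?V" by (rule ks_Wm[OF abcd])
  have V4: "(a,c) \<in> ?V" "(b,d) \<in> ?V" "(a,d) \<in> ?V" "(b,c) \<in> ?V" using abcd by (simp_all add: inV)
  have key: "y = ?W" if i: "i < s" and y: "ks y \<subseteq> ?V" and dy: "degB ?V (Bs i) y = degB ?V (Bs i) ?W" for i y
  proof -
    have "(sg y 1 - sg ?W 1 :: ((nat\<times>nat),'k) mpoly) \<in> toric_ideal ?V (Bs i)"
      using bin_in_toric[OF y WV] dy by metis
    then have "(sg y 1 - sg ?W 1 :: ((nat\<times>nat),'k) mpoly) \<in> toric_ideal ?V (Kmn_config m n)"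
      using sub i by blast
    then have "degB ?V (Kmn_config m n) y = degB ?V (Kmn_config m n) ?W"
      by (rule toric_bin_deg[OF _ y WV])
    then have "EQ m n y ?W" by (simp add: degK_eq_iff EQ_def)
    then have fr: "lk y (a,c) \<le> k \<and> y = sg (a,c) (lk y (a,c)) + sg (b,d) (lk y (a,c))
            + sg (a,d) (k - lk y (a,c)) + sg (b,c) (k - lk y (a,c))"
      by (rule fiber_rep[OF abcd ne y])
    define p where "p = lk y (a,c)"
    have pk: "p \<le> k" and yp: "y = sg (a,c) p + sg (b,d) p + sg (a,d) (k - p) + sg (b,c) (k - p)"
      using fr unfolding p_def by auto
    obtain r where r: "Bs i (a,c) r + Bs i (b,d) r \<noteq> Bs i (a,d) r + Bs i (b,c) r"
      using nZ i unfolding Zq_def by blast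
    let ?X = "Bs i (a,c) r + Bs i (b,d) r"
    let ?Y = "Bs i (a,d) r + Bs i (b,c) r"
    have "degB ?V (Bs i) y r = int p * ?X + int (k - p) * ?Y"
      unfolding yp by (simp add: degB_add degB_sg V4 algebra_simps)
    moreover have "degB ?V (Bs i) ?W r = int k * ?Y"
      unfolding Wm_def by (simp add: degB_add degB_sg V4 algebra_simps)
    ultimately have "int p * ?X + int (k - p) * ?Y = int k * ?Y" using dy by metis
    then have "int p * (?X - ?Y) = 0" using pk by (simp add: of_nat_diff algebra_simps)
    then have "p = 0" using r by simp
    then show "y = ?W" using yp by (simp add: Wm_def)
  qed
  show ?thesis unfolding closedC_def
  proof (intro ballI allI impI)
    fix B x y assume B: "B \<in> Bs ` {..<s}" and x: "ks x \<subseteq> ?V" and y: "ks y \<subseteq> ?V"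
      and dxy: "degB ?V B x = degB ?V B y"
    obtain i where i: "i < s" "B = Bs i" using B by blast
    show "(x \<in> {?W}) = (y \<in> {?W})"
      using key[OF i(1) x] key[OF i(1) y] dxy i(2) by auto
  qed
qed



lemma rad_IA:
  "radical_in (Kmn_edges m n) (toric_ideal (Kmn_edges m n) (Kmn_config m n) :: ((nat\<times>nat),'k::field) mpoly set)
    = toric_ideal (Kmn_edges m n) (Kmn_config m n)"
proof
  show "radical_in (Kmn_edges m n) (toric_ideal (Kmn_edges m n) (Kmn_config m n) :: ((nat\<times>nat),'k) mpoly set)
    \<subseteq> toric_ideal (Kmn_edges m n) (Kmn_config m n)"
    unfolding radical_in_def using Kmn_radical by blast
  show "(toric_ideal (Kmn_edges m n) (Kmn_config m n) :: ((nat\<times>nat),'k) mpoly set)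
    \<subseteq> radical_in (Kmn_edges m n) (toric_ideal (Kmn_edges m n) (Kmn_config m n))"
    unfolding radical_in_def using toric_PR by (fastforce intro: exI[of _ 1])
qed

lemma split_imp_rad:
  "splits_into TYPE('k::field) (Kmn_edges m n) (Kmn_config m n) s \<Longrightarrow>
   rad_splits_into TYPE('k) (Kmn_edges m n) (Kmn_config m n) s"
  unfolding splits_into_def rad_splits_into_def
proof (elim exE conjE)
  fix As :: "nat \<Rightarrow> nat\<times>nat \<Rightarrow> nat \<Rightarrow> int"
  assume h: "\<forall>i<s. toric_config (Kmn_edges m n) (As i)"
    "\<forall>i<s. (toric_ideal (Kmn_edges m n) (As i) :: ((nat\<times>nat),'k) mpoly set) \<noteq> toric_ideal (Kmn_edges m n) (Kmn_config m n)"
    and eq: "(toric_ideal (Kmn_edges m n) (Kmn_config m n) :: ((nat\<times>nat),'k) mpoly set) =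
      ideal_gen (Kmn_edges m n) (\<Union>i<s. toric_ideal (Kmn_edges m n) (As i))"
  have "(toric_ideal (Kmn_edges m n) (Kmn_config m n) :: ((nat\<times>nat),'k) mpoly set) =
      radical_in (Kmn_edges m n) (ideal_gen (Kmn_edges m n) (\<Union>i<s. toric_ideal (Kmn_edges m n) (As i)))"
    using rad_IA[where 'k='k, of m n] eq by simp
  then show "\<exists>As. (\<forall>i<s. toric_config (Kmn_edges m n) (As i)) \<and>
           (\<forall>i<s. (toric_ideal (Kmn_edges m n) (As i) :: ((nat\<times>nat),'k) mpoly set) \<noteq> toric_ideal (Kmn_edges m n) (Kmn_config m n)) \<and>
           (toric_ideal (Kmn_edges m n) (Kmn_config m n) :: ((nat\<times>nat),'k) mpoly set) =
           radical_in (Kmn_edges m n) (ideal_gen (Kmn_edges m n) (\<Union>i<s. toric_ideal (Kmn_edges m n) (As i)))"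
    using h by blast
qed

lemma avoid2: "\<exists>l<3. l \<noteq> (x::nat) \<and> l \<noteq> y"
proof (cases "x \<noteq> 0 \<and> y \<noteq> 0")
  case True then show ?thesis by (intro exI[of _ 0]) simp
next
  case False
  show ?thesis
  proof (cases "x \<noteq> 1 \<and> y \<noteq> 1")
    case True then show ?thesis by (intro exI[of _ 1]) simp
  next
    case False2: False
    then show ?thesis using False by (intro exI[of _ 2]) auto
  qed
qed

lemma split3:
  assumes m: "m \<ge> 2" and n: "n \<ge> 2" and mn: "(m, n) \<noteq> (2, 2)"
  shows "splits_into TYPE('k::field) (Kmn_edges m n) (Kmn_config m n) 3"
proof -
  let ?V = "Kmn_edges m n"
  let ?IA = "toric_ideal ?V (Kmn_config m n) :: ((nat\<times>nat),'k) mpoly set"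
  define E where "E l = (if 3 \<le> n then (0,l) else (l,0))" for l :: nat
  define As where "As l = Al m n (E l)" for l
  have EV: "E l \<in> ?V" if l: "l < 3" for l
  proof (cases "3 \<le> n")
    case True
    then show ?thesis using l m by (simp add: E_def inV)
  next
    case False
    then have "n = 2" using n by simp
    then have "m \<ge> 3" using m mn by auto
    then show ?thesis using l n False by (simp add: E_def inV)
  qed
  have cfg: "\<forall>l<3. toric_config ?V (As l)"
  proof (intro allI impI)
    fix l :: nat assume "l < 3"
    then show "toric_config ?V (As l)" unfolding As_def by (rule Al_config[OF EV])
  qed
  have ne: "\<forall>l<3. (toric_ideal ?V (As l) :: ((nat\<times>nat),'k) mpoly set) \<noteq> ?IA"
  proof (intro allI impI)
    fix l :: nat assume l: "l < 3"
    obtain a0 c0 where E0: "E l = (a0,c0)" by fastforce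
    have a0: "a0 < m" and c0: "c0 < n" using EV[OF l] E0 by (auto simp: inV)
    define b0 :: nat where "b0 = (if a0 = 0 then 1 else 0)"
    define d0 :: nat where "d0 = (if c0 = 0 then 1 else 0)"
    have b0: "b0 < m" "a0 \<noteq> b0" using m by (auto simp: b0_def)
    have d0: "d0 < n" "c0 \<noteq> d0" using n by (auto simp: d0_def)
    have "quad a0 b0 c0 d0 \<in> ?IA"
      using quad_in_toric_iff[OF a0 b0(1) c0 d0(1)] Zq_Kmn[OF a0 b0(1) c0 d0(1)] by blast
    moreover have "quad a0 b0 c0 d0 \<notin> (toric_ideal ?V (As l) :: ((nat\<times>nat),'k) mpoly set)"
      unfolding As_def E0 by (rule quad_notin_J[OF a0 b0(1) c0 d0(1) b0(2) d0(2)])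
    ultimately show "(toric_ideal ?V (As l) :: ((nat\<times>nat),'k) mpoly set) \<noteq> ?IA" by blast
  qed
  let ?G = "ideal_gen ?V (\<Union>l<3. toric_ideal ?V (As l)) :: ((nat\<times>nat),'k) mpoly set"
  have UPR: "(\<Union>l<3. toric_ideal ?V (As l)) \<subseteq> (PR ?V :: ((nat\<times>nat),'k) mpoly set)"
    using toric_PR by blast
  have Gid: "is_ideal_in ?V ?G" by (rule ideal_gen_ideal[OF UPR])
  have "?IA \<subseteq> ?G"
  proof (rule quad_gen[OF Gid])
    fix a b c d assume abcd: "a < m" "b < m" "c < n" "d < n"
    obtain l where l: "l < 3" "quad a b c d \<in> (toric_ideal ?V (As l) :: ((nat\<times>nat),'k) mpoly set)"
    proof (cases "3 \<le> n")
      case True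
      obtain l where l: "l < 3" "l \<noteq> c" "l \<noteq> d" using avoid2 by blast
      have "E l = (0,l)" using True by (simp add: E_def)
      then have "quad a b c d \<in> (toric_ideal ?V (As l) :: ((nat\<times>nat),'k) mpoly set)"
        unfolding As_def using quad_in_J[OF EV[OF l(1)] abcd] l by simp
      then show ?thesis using that l by blast
    next
      case False
      obtain l where l: "l < 3" "l \<noteq> a" "l \<noteq> b" using avoid2 by blast
      have "E l = (l,0)" using False by (simp add: E_def)
      then have "quad a b c d \<in> (toric_ideal ?V (As l) :: ((nat\<times>nat),'k) mpoly set)"
        unfolding As_def using quad_in_J[OF EV[OF l(1)] abcd] l by simp
      then show ?thesis using that l by blast
    qed
    then have "quad a b c d \<in> (\<Union>l<3. toric_ideal ?V (As l) :: ((nat\<times>nat),'k) mpoly set)"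
      by blast
    then show "quad a b c d \<in> ?G" by (rule subsetD[OF ideal_gen_sup])
  qed
  moreover have "?G \<subseteq> ?IA"
  proof (rule ideal_gen_min[OF toric_ideal_ideal], rule UN_least)
    fix l assume "l \<in> {..<(3::nat)}"
    then have "l < 3" by simp
    then show "(toric_ideal ?V (As l) :: ((nat\<times>nat),'k) mpoly set) \<subseteq> ?IA"
      unfolding As_def by (rule J_sub_IA[OF EV])
  qed
  ultimately have eqG: "?IA = ?G" by (rule subset_antisym)
  show ?thesis unfolding splits_into_def
    by (intro exI[of _ As] conjI cfg ne eqG)
qed

lemma no_rad_split:
  assumes m: "m \<ge> 2" and n: "n \<ge> 2" and s: "s < 3"
  shows "\<not> rad_splits_into TYPE('k::field) (Kmn_edges m n) (Kmn_config m n) s"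
proof
  let ?V = "Kmn_edges m n"
  let ?IA = "toric_ideal ?V (Kmn_config m n) :: ((nat\<times>nat),'k) mpoly set"
  assume "rad_splits_into TYPE('k) ?V (Kmn_config m n) s"
  then obtain As :: "nat \<Rightarrow> nat\<times>nat \<Rightarrow> nat \<Rightarrow> int" where
    ne: "\<forall>i<s. (toric_ideal ?V (As i) :: ((nat\<times>nat),'k) mpoly set) \<noteq> ?IA" and
    eq: "?IA = radical_in ?V (ideal_gen ?V (\<Union>i<s. toric_ideal ?V (As i)))"
    unfolding rad_splits_into_def by blast
  let ?G = "ideal_gen ?V (\<Union>i<s. toric_ideal ?V (As i)) :: ((nat\<times>nat),'k) mpoly set"
  have sub: "\<forall>i<s. (toric_ideal ?V (As i) :: ((nat\<times>nat),'k) mpoly set) \<subseteq> ?IA"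
  proof (intro allI impI subsetI)
    fix i x assume i: "i < s" and x: "x \<in> (toric_ideal ?V (As i) :: ((nat\<times>nat),'k) mpoly set)"
    have "x \<in> (\<Union>i<s. toric_ideal ?V (As i) :: ((nat\<times>nat),'k) mpoly set)" using x i by blast
    then have "x \<in> ?G" by (rule subsetD[OF ideal_gen_sup])
    moreover have "x \<in> PR ?V" using x toric_PR by blast
    ultimately have "x \<in> radical_in ?V ?G" unfolding radical_in_def by (auto intro: exI[of _ 1])
    then show "x \<in> ?IA" using eq by simp
  qed
  have notall: "\<not> (\<forall>a<m. \<forall>b<m. \<forall>c<n. \<forall>d<n. Zq (As i) a b c d)" if i: "i < s" for i
  proof
    assume all: "\<forall>a<m. \<forall>b<m. \<forall>c<n. \<forall>d<n. Zq (As i) a b c d"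
    have "?IA \<subseteq> toric_ideal ?V (As i)"
    proof (rule quad_gen[OF toric_ideal_ideal])
      fix a b c d assume abcd: "a < m" "b < m" "c < n" "d < n"
      then show "quad a b c d \<in> (toric_ideal ?V (As i) :: ((nat\<times>nat),'k) mpoly set)"
        using quad_in_toric_iff[OF abcd] all by blast
    qed
    then show False using sub ne i by blast
  qed
  obtain a b c d where abcd: "a < m" "b < m" "c < n" "d < n" and abne: "a \<noteq> b" "c \<noteq> d"
    and nZ: "\<forall>i<s. \<not> Zq (As i) a b c d"
  proof (cases "s = 0")
    case True
    show ?thesis by (rule that[of 0 1 0 1]) (use m n True in auto)
  next
    case False
    note outer = that
    show ?thesis
    proof (rule ccontr)
      assume nex: "\<not> ?thesis"
      have ex: "\<exists>i<s. Zq (As i) a b c d"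
        if "a < m" "b < m" "c < n" "d < n" "a \<noteq> b" "c \<noteq> d" for a b c d
        using outer[OF that] nex by blast
      have cov: "\<forall>a<m. \<forall>b<m. \<forall>c<n. \<forall>d<n. Zq (As 0) a b c d \<or> Zq (As (s - 1)) a b c d"
      proof (intro allI impI)
        fix a b c d assume abcd: "a < m" "b < m" "c < n" "d < n"
        show "Zq (As 0) a b c d \<or> Zq (As (s - 1)) a b c d"
        proof (cases "a = b \<or> c = d")
          case True then show ?thesis using Zq_degen by blast
        next
          case False
          then obtain i where i: "i < s" "Zq (As i) a b c d" using ex abcd by blast
          then have "i = 0 \<or> i = s - 1" using s by linarith
          then show ?thesis using i by blast
        qed
      qed
      from level[OF cov] show False using notall[of 0] notall[of "s - 1"] False by auto
    qed
  qed
  have qIA: "quad a b c d \<in> ?IA"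
    using quad_in_toric_iff[OF abcd] Zq_Kmn[OF abcd] by blast
  then obtain k where k: "quad a b c d ^ k \<in> ?G" using eq unfolding radical_in_def by blast
  then have "quad a b c d ^ k \<in> (Hset ?V (As ` {..<s}) :: ((nat\<times>nat),'k) mpoly set)"
    by (rule subsetD[OF gen_sub_Hset])
  then have H: "\<forall>C. closedC ?V (As ` {..<s}) C \<longrightarrow> T (ind C) (quad a b c d ^ k :: ((nat\<times>nat),'k) mpoly) = 0"
    by (simp add: Hset_def)
  have "closedC ?V (As ` {..<s}) {Wm a b c d k}"
    by (rule closed_W[OF abcd abne nZ sub])
  then have "T (ind {Wm a b c d k}) (quad a b c d ^ k :: ((nat\<times>nat),'k) mpoly) = 0"
    using H by blast
  then have "lk (quad a b c d ^ k :: ((nat\<times>nat),'k) mpoly) (Wm a b c d k) = 0"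
    by (simp add: T_ind_single)
  then show False using quad_pow_lookup[OF abne, where 'k='k, of k] by simp
qed

theorem theorem3p3:
  fixes m n :: nat
  assumes "m \<ge> 2" and "n \<ge> 2" and "(m, n) \<noteq> (2, 2)"
  shows "(\<exists>s. splits_into TYPE('k::field) (Kmn_edges m n) (Kmn_config m n) s)
       \<and> split_number TYPE('k) (Kmn_edges m n) (Kmn_config m n) = 3
       \<and> (\<exists>r. rad_splits_into TYPE('k) (Kmn_edges m n) (Kmn_config m n) r)
       \<and> rad_split_number TYPE('k) (Kmn_edges m n) (Kmn_config m n) = 3"
proof -
  have s3: "splits_into TYPE('k) (Kmn_edges m n) (Kmn_config m n) 3"
    by (rule split3[OF assms])
  have r3: "rad_splits_into TYPE('k) (Kmn_edges m n) (Kmn_config m n) 3"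
    by (rule split_imp_rad[OF s3])
  have rlow: "3 \<le> r" if "rad_splits_into TYPE('k) (Kmn_edges m n) (Kmn_config m n) r" for r
    using no_rad_split[OF assms(1,2), of r] that by (meson not_le)
  have slow: "3 \<le> s" if "splits_into TYPE('k) (Kmn_edges m n) (Kmn_config m n) s" for s
    using rlow[OF split_imp_rad[OF that]] .
  have "split_number TYPE('k) (Kmn_edges m n) (Kmn_config m n) = 3"
    unfolding split_number_def by (rule Least_equality, rule s3, erule slow)
  moreover have "rad_split_number TYPE('k) (Kmn_edges m n) (Kmn_config m n) = 3"
    unfolding rad_split_number_def by (rule Least_equality, rule r3, erule rlow)
  ultimately show ?thesis using s3 r3 by blast
qed

end
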